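(* Let $W$ be a finite-dimensional battery system with Hamiltonian $H_W$ and let $|0\rangle_W$ be an eigenvector of $H_W$. Suppose $\mathcal{T}$ is a Thermal Operation on $SW$ (with respect to $H_S\otimes\mathbb{I}+\mathbb{I}\otimes H_W$) such that $\mathcal{T}(\rho_S\otimes|0\rangle\langle0|_W)=\gamma_S\otimes\sigma_W$ for some state $\sigma_W$ with $[\sigma_W,H_W]=0$. Then also $\mathcal{T}(\mathcal{D}(\rho_S)\otimes|0\rangle\langle0|_W)=\gamma_S\otimes\sigma_W$.
   Context: $S$ is a finite-dimensional system with Hamiltonian $H_S$, $\beta>0$, $\gamma_S=e^{-\beta H_S}/\mathrm{tr}\,e^{-\beta H_S}$. A Thermal Operation on a system $X$ with Hamiltonian $H_X$ is a channel $\mathcal{T}(\rho)=\mathrm{tr}_B[U(\rho\otimes\gamma_B)U^\dagger]$ with $B$ any finite-dimensional system, $H_B$ any Hamiltonian, $\gamma_B=e^{-\beta H_B}/\mathrm{tr}\,e^{-\beta H_B}$, and $U$ unitary with $[U,H_X\otimes\mathbb{I}+\mathbb{I}\otimes H_B]=0$. $\mathcal{D}(\rho)=\lim_{s\to\infty}\frac1s\int_0^se^{-iH_St}\rho e^{iH_St}dt$ is the dephasing map on $S$. *)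

theory Defs
  imports "HOL-Analysis.Analysis" "Jordan_Normal_Form.Schur_Decomposition" "Jordan_Normal_Form.Char_Poly"
begin

text \<open>Finite-dimensional quantum mechanics with complex matrices (Jordan_Normal_Form).
 Composite systems XB use the Kronecker ordering: index (i,k) of X (dim dX) and B (dim dB)
 corresponds to i*dB+k.\<close>

definition ctrace :: "complex mat \<Rightarrow> complex" where
  "ctrace A = (\<Sum>i<dim_row A. A $$ (i,i))"

definition hermitian_mat :: "nat \<Rightarrow> complex mat \<Rightarrow> bool" where
  "hermitian_mat n A \<longleftrightarrow> A \<in> carrier_mat n n \<and> mat_adjoint A = A"

definition unitary_mat :: "nat \<Rightarrow> complex mat \<Rightarrow> bool" where
  "unitary_mat n U \<longleftrightarrow> U \<in> carrier_mat n n \<and> mat_adjoint U * U = 1\<^sub>m n \<and> U * mat_adjoint U = 1\<^sub>m n"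

definition density_mat :: "nat \<Rightarrow> complex mat \<Rightarrow> bool" where
  "density_mat n \<rho> \<longleftrightarrow> hermitian_mat n \<rho>
     \<and> (\<forall>v \<in> carrier_vec n. 0 \<le> Re ((\<rho> *\<^sub>v v) \<bullet>c v))
     \<and> ctrace \<rho> = 1"

definition kron :: "complex mat \<Rightarrow> complex mat \<Rightarrow> complex mat" where
  "kron A B = mat (dim_row A * dim_row B) (dim_col A * dim_col B)
     (\<lambda>(i,j). A $$ (i div dim_row B, j div dim_col B) * B $$ (i mod dim_row B, j mod dim_col B))"

definition ptrace2 :: "nat \<Rightarrow> complex mat \<Rightarrow> complex mat" where
  "ptrace2 dB M = mat (dim_row M div dB) (dim_col M div dB)
     (\<lambda>(i,j). \<Sum>k<dB. M $$ (i*dB+k, j*dB+k))"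

definition proj_vec :: "complex vec \<Rightarrow> complex mat" where
  "proj_vec v = mat (dim_vec v) (dim_vec v) (\<lambda>(i,j). v $ i * cnj (v $ j))"

definition mexp :: "complex mat \<Rightarrow> complex mat" where
  "mexp A = mat (dim_row A) (dim_col A)
     (\<lambda>(i,j). \<Sum>k. (A ^\<^sub>m k) $$ (i,j) / of_nat (fact k))"

definition gibbs :: "real \<Rightarrow> complex mat \<Rightarrow> complex mat" where
  "gibbs \<beta> H = (let E = mexp ((- complex_of_real \<beta>) \<cdot>\<^sub>m H) in (1 / ctrace E) \<cdot>\<^sub>m E)"

definition thermal_op :: "real \<Rightarrow> nat \<Rightarrow> complex mat \<Rightarrow> (complex mat \<Rightarrow> complex mat) \<Rightarrow> bool" where
  "thermal_op \<beta> dX HX T \<longleftrightarrow>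
     (\<exists>dB HB U. 0 < dB \<and> hermitian_mat dB HB \<and> unitary_mat (dX * dB) U
        \<and> U * (kron HX (1\<^sub>m dB) + kron (1\<^sub>m dX) HB) = (kron HX (1\<^sub>m dB) + kron (1\<^sub>m dX) HB) * U
        \<and> (\<forall>\<rho>. density_mat dX \<rho> \<longrightarrow>
              T \<rho> = ptrace2 dB (U * kron \<rho> (gibbs \<beta> HB) * mat_adjoint U)))"

definition dephase :: "complex mat \<Rightarrow> complex mat \<Rightarrow> complex mat" where
  "dephase H \<rho> = mat (dim_row \<rho>) (dim_col \<rho>)
     (\<lambda>(i,j). Lim at_top (\<lambda>s::real. (1 / complex_of_real s) *
        integral {0..s} (\<lambda>t::real.
          (mexp ((- \<i> * complex_of_real t) \<cdot>\<^sub>m H) * \<rho> * mexp ((\<i> * complex_of_real t) \<cdot>\<^sub>m H)) $$ (i,j))))"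

end

theory Submission
  imports Defs
begin

lemma adj_carrier[simp]: "A \<in> carrier_mat n m \<Longrightarrow> mat_adjoint A \<in> carrier_mat m n"
  unfolding mat_adjoint_def by (auto simp: mat_of_rows_def)

lemma adj_dims[simp]: "dim_row (mat_adjoint A) = dim_col A" "dim_col (mat_adjoint A) = dim_row A"
  unfolding mat_adjoint_def by (auto simp: mat_of_rows_def)

lemma adj_index[simp]: "i < dim_col A \<Longrightarrow> j < dim_row A \<Longrightarrow> mat_adjoint A $$ (i,j) = cnj (A $$ (j,i))"
  unfolding mat_adjoint_def by (auto simp: mat_of_rows_def)

lemma sum_split: "(\<Sum>p<n*m. f p) = (\<Sum>i<n. \<Sum>k<m. f (i*m+k::nat))"
proof -
  have "(\<Sum>p<n*m. f p) = (\<Sum>i<n. sum f {i*m..<i*m+m})" by (rule sum.nat_group[symmetric])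
  also have "\<dots> = (\<Sum>i<n. \<Sum>k<m. f (i*m+k))"
  proof (rule sum.cong[OF refl])
    fix i
    have "sum f {i*m..<i*m+m} = sum f {0+i*m..<m+i*m}" by (simp add: add.commute)
    also have "\<dots> = (\<Sum>k<m. f (i*m+k))" by (subst sum.shift_bounds_nat_ivl, simp add: atLeast0LessThan add.commute)
    finally show "sum f {i*m..<i*m+m} = (\<Sum>k<m. f (i*m+k))" .
  qed
  finally show ?thesis .
qed

lemma divmod_idx: "k < (m::nat) \<Longrightarrow> (i*m+k) div m = i" "k < (m::nat) \<Longrightarrow> (i*m+k) mod m = k"
  by auto

lemma idx_lt: "i < n \<Longrightarrow> k < (m::nat) \<Longrightarrow> i*m+k < n*m"
proof -
  assume "i < n" "k < m"
  hence "i*m+k < i*m + m" by simp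
  also have "\<dots> = (Suc i) * m" by simp
  also have "\<dots> \<le> n * m" using \<open>i<n\<close> by (intro mult_le_mono1) simp
  finally show ?thesis .
qed

lemma idx_decomp: "p < n*(m::nat) \<Longrightarrow> p = (p div m)*m + p mod m \<and> p div m < n \<and> p mod m < m"
  by (metis div_mult_mod_eq less_mult_imp_div_less mod_less_divisor mult.commute mult_pos_pos
        nat_0_less_mult_iff zero_less_iff_neq_zero not_less_zero)

lemma kron_carrier[simp]: "A \<in> carrier_mat a1 a2 \<Longrightarrow> B \<in> carrier_mat b1 b2 \<Longrightarrow> kron A B \<in> carrier_mat (a1*b1) (a2*b2)"
  unfolding kron_def by auto

lemma kron_dims[simp]: "dim_row (kron A B) = dim_row A * dim_row B" "dim_col (kron A B) = dim_col A * dim_col B"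
  unfolding kron_def by auto

lemma kron_index: "i < dim_row A * dim_row B \<Longrightarrow> j < dim_col A * dim_col B \<Longrightarrow>
   kron A B $$ (i,j) = A $$ (i div dim_row B, j div dim_col B) * B $$ (i mod dim_row B, j mod dim_col B)"
  unfolding kron_def by auto

lemma kron_index2: "i < dim_row A \<Longrightarrow> j < dim_col A \<Longrightarrow> k < dim_row B \<Longrightarrow> l < dim_col B \<Longrightarrow>
   kron A B $$ (i * dim_row B + k, j * dim_col B + l) = A $$ (i,j) * B $$ (k,l)"
  by (subst kron_index, auto intro: idx_lt)

lemma kron_index2c: "A \<in> carrier_mat a1 a2 \<Longrightarrow> B \<in> carrier_mat b1 b2 \<Longrightarrow> i < a1 \<Longrightarrow> j < a2 \<Longrightarrow> k < b1 \<Longrightarrow> l < b2 \<Longrightarrow>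
   kron A B $$ (i * b1 + k, j * b2 + l) = A $$ (i,j) * B $$ (k,l)"
  using kron_index2[of i A j k B l] by auto

lemma kron_mult:
  assumes A: "A \<in> carrier_mat a1 a2" and C: "C \<in> carrier_mat a2 a3"
    and B: "B \<in> carrier_mat b1 b2" and D: "D \<in> carrier_mat b2 b3"
  shows "kron A B * kron C D = kron (A*C) (B*D)"
proof (rule eq_matI)
  fix i j assume i: "i < dim_row (kron (A*C) (B*D))" and j: "j < dim_col (kron (A*C) (B*D))"
  from i j A B C D have i': "i < a1*b1" and j': "j < a3*b3" by auto
  from idx_decomp[OF i'] have id: "i div b1 < a1" "i mod b1 < b1" by auto
  from idx_decomp[OF j'] have jd: "j div b3 < a3" "j mod b3 < b3" by auto
  have "(kron A B * kron C D) $$ (i,j) = (\<Sum>p<a2*b2. kron A B $$ (i,p) * kron C D $$ (p,j))"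
    using i' j' A B C D by (simp add: scalar_prod_def row_def col_def atLeast0LessThan)
  also have "\<dots> = (\<Sum>x<a2. \<Sum>y<b2. kron A B $$ (i,x*b2+y) * kron C D $$ (x*b2+y,j))"
    by (rule sum_split)
  also have "\<dots> = (\<Sum>x<a2. \<Sum>y<b2. (A $$ (i div b1, x) * C $$ (x, j div b3)) * (B $$ (i mod b1, y) * D $$ (y, j mod b3)))"
    using A B C D i' j' by (intro sum.cong refl, subst (1 2) kron_index, auto intro: idx_lt)
  also have "\<dots> = (A*C) $$ (i div b1, j div b3) * (B*D) $$ (i mod b1, j mod b3)"
    using A B C D id jd by (simp add: scalar_prod_def sum_product atLeast0LessThan)
  also have "\<dots> = kron (A*C) (B*D) $$ (i,j)"
    using A B C D i' j' by (subst kron_index, auto)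
  finally show "(kron A B * kron C D) $$ (i,j) = kron (A*C) (B*D) $$ (i,j)" .
qed (insert A B C D, auto)

lemma kron_add_left: assumes "A \<in> carrier_mat a1 a2" "A' \<in> carrier_mat a1 a2" "B \<in> carrier_mat b1 b2"
  shows "kron (A + A') B = kron A B + kron A' B"
  using assms by (intro eq_matI, auto simp: kron_index distrib_right idx_decomp)

lemma kron_add_right: assumes "A \<in> carrier_mat a1 a2" "B \<in> carrier_mat b1 b2" "B' \<in> carrier_mat b1 b2"
  shows "kron A (B + B') = kron A B + kron A B'"
  using assms by (intro eq_matI, auto simp: kron_index distrib_left idx_decomp)

lemma kron_smult_left: assumes "A \<in> carrier_mat a1 a2" "B \<in> carrier_mat b1 b2"
  shows "kron (c \<cdot>\<^sub>m A) B = c \<cdot>\<^sub>m kron A B"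
  using assms by (intro eq_matI, auto simp: kron_index idx_decomp)

lemma kron_minus_left: assumes "A \<in> carrier_mat a1 a2" "A' \<in> carrier_mat a1 a2" "B \<in> carrier_mat b1 b2"
  shows "kron (A - A') B = kron A B - kron A' B"
  using assms by (intro eq_matI, auto simp: kron_index left_diff_distrib idx_decomp)

lemma kron_minus_right: assumes "A \<in> carrier_mat a1 a2" "B \<in> carrier_mat b1 b2" "B' \<in> carrier_mat b1 b2"
  shows "kron A (B - B') = kron A B - kron A B'"
  using assms by (intro eq_matI, auto simp: kron_index right_diff_distrib idx_decomp)

lemma adj_adj[simp]: "mat_adjoint (mat_adjoint A) = (A :: complex mat)"
  by (rule eq_matI, auto simp: adj_index)

lemma adj_mult: fixes A B :: "complex mat" assumes "A \<in> carrier_mat n m" "B \<in> carrier_mat m k"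
  shows "mat_adjoint (A * B) = mat_adjoint B * mat_adjoint A"
proof (rule eq_matI)
  fix i j assume "i < dim_row (mat_adjoint B * mat_adjoint A)" "j < dim_col (mat_adjoint B * mat_adjoint A)"
  with assms have i: "i < k" and j: "j < n" by auto
  show "mat_adjoint (A * B) $$ (i, j) = (mat_adjoint B * mat_adjoint A) $$ (i, j)"
    using assms i j by (auto simp: scalar_prod_def sum_conjugate mult.commute intro!: sum.cong)
qed (insert assms, auto)

lemma adj_add: fixes A B :: "complex mat" assumes "A \<in> carrier_mat n m" "B \<in> carrier_mat n m"
  shows "mat_adjoint (A + B) = mat_adjoint A + mat_adjoint B"
proof (rule eq_matI)
  fix i j assume "i < dim_row (mat_adjoint A + mat_adjoint B)" "j < dim_col (mat_adjoint A + mat_adjoint B)"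
  with assms have i: "i < m" and j: "j < n" by auto
  show "mat_adjoint (A + B) $$ (i, j) = (mat_adjoint A + mat_adjoint B) $$ (i, j)"
    using assms i j by auto
qed (insert assms, auto)

lemma adj_minus: fixes A B :: "complex mat" assumes "A \<in> carrier_mat n m" "B \<in> carrier_mat n m"
  shows "mat_adjoint (A - B) = mat_adjoint A - mat_adjoint B"
proof (rule eq_matI)
  fix i j assume "i < dim_row (mat_adjoint A - mat_adjoint B)" "j < dim_col (mat_adjoint A - mat_adjoint B)"
  with assms have i: "i < m" and j: "j < n" by auto
  show "mat_adjoint (A - B) $$ (i, j) = (mat_adjoint A - mat_adjoint B) $$ (i, j)"
    using assms i j by auto
qed (insert assms, auto)

lemma adj_smult: "mat_adjoint (c \<cdot>\<^sub>m A) = cnj c \<cdot>\<^sub>m mat_adjoint A"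
  by (intro eq_matI, auto)

lemma adj_one[simp]: "mat_adjoint (1\<^sub>m n) = (1\<^sub>m n :: complex mat)"
proof (rule eq_matI)
  fix i j assume "i < dim_row (1\<^sub>m n :: complex mat)" "j < dim_col (1\<^sub>m n :: complex mat)"
  hence "i < n" "j < n" by auto
  thus "mat_adjoint (1\<^sub>m n) $$ (i, j) = (1\<^sub>m n :: complex mat) $$ (i, j)" by (subst adj_index, auto)
qed auto

lemma hermitianD: "hermitian_mat n A \<Longrightarrow> i < n \<Longrightarrow> j < n \<Longrightarrow> cnj (A $$ (j,i)) = A $$ (i,j)"
  unfolding hermitian_mat_def by (metis adj_index carrier_matD)

lemma hermitianI: "A \<in> carrier_mat n n \<Longrightarrow> (\<And>i j. i < n \<Longrightarrow> j < n \<Longrightarrow> cnj (A $$ (j,i)) = A $$ (i,j)) \<Longrightarrow> hermitian_mat n A"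
  unfolding hermitian_mat_def by (auto intro!: eq_matI)

lemma unitary_mult: assumes "unitary_mat n U" "unitary_mat n V" shows "unitary_mat n (U * V)"
proof -
  from assms have U: "U \<in> carrier_mat n n" and V: "V \<in> carrier_mat n n"
    and u1: "mat_adjoint U * U = 1\<^sub>m n" and u2: "U * mat_adjoint U = 1\<^sub>m n"
    and v1: "mat_adjoint V * V = 1\<^sub>m n" and v2: "V * mat_adjoint V = 1\<^sub>m n"
    unfolding unitary_mat_def by auto
  have "mat_adjoint (U*V) * (U*V) = (mat_adjoint V * mat_adjoint U) * (U * V)"
    using U V by (simp add: adj_mult)
  also have "\<dots> = mat_adjoint V * (mat_adjoint U * (U * V))"
    using U V by (intro assoc_mult_mat[of _ n n _ n _ n], auto)
  also have "mat_adjoint U * (U * V) = (mat_adjoint U * U) * V"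
    using U V by (intro assoc_mult_mat[of _ n n _ n _ n, symmetric], auto)
  also have "\<dots> = V" using u1 V by simp
  finally have 1: "mat_adjoint (U*V) * (U*V) = 1\<^sub>m n" using v1 by simp
  have "(U*V) * mat_adjoint (U*V) = (U * V) * (mat_adjoint V * mat_adjoint U)"
    using U V by (simp add: adj_mult)
  also have "\<dots> = U * (V * (mat_adjoint V * mat_adjoint U))"
    using U V by (intro assoc_mult_mat[of _ n n _ n _ n], auto)
  also have "V * (mat_adjoint V * mat_adjoint U) = (V * mat_adjoint V) * mat_adjoint U"
    using U V by (intro assoc_mult_mat[of _ n n _ n _ n, symmetric], auto)
  also have "\<dots> = mat_adjoint U" using v2 U by simp
  finally show ?thesis using 1 U V u2 unfolding unitary_mat_def by auto
qed

lemma udiag_index: assumes "V \<in> carrier_mat n n" "i < n" "j < n"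
  shows "(V * mat_diag n f * mat_adjoint V) $$ (i,j) = (\<Sum>a<n. V $$ (i,a) * f a * cnj (V $$ (j,a)))"
  using assms by (simp add: mat_diag_mult_right scalar_prod_def atLeast0LessThan)

section \<open>Spectral theorem\<close>

lemma cscalar_sum: "v \<in> carrier_vec n \<Longrightarrow> w \<in> carrier_vec n \<Longrightarrow> v \<bullet>c w = (\<Sum>i<n. v $ i * cnj (w $ i))"
  by (auto simp: scalar_prod_def atLeast0LessThan)

lemma cnj_mult_self: "z * cnj z = complex_of_real ((cmod z)^2)"
  using complex_norm_square by (simp add: mult.commute)

lemma sum_sq_zero: assumes "(\<Sum>i<n. u i * cnj (u i)) = (0::complex)" "i < (n::nat)" shows "u i = 0"
proof -
  have "(\<Sum>i<n. u i * cnj (u i)) = complex_of_real (\<Sum>i<n. (cmod (u i))^2)"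
    by (simp add: cnj_mult_self)
  with assms have "complex_of_real (\<Sum>i<n. (cmod (u i))^2) = 0" by simp
  hence "(\<Sum>i<n. (cmod (u i))^2) = 0" by (simp only: of_real_eq_0_iff)
  moreover have "(cmod (u i))^2 \<le> (\<Sum>i<n. (cmod (u i))^2)"
    by (rule member_le_sum, insert assms, auto)
  ultimately have "(cmod (u i))^2 \<le> 0" by simp
  thus ?thesis by (metis norm_eq_zero power2_less_eq_zero_iff)
qed

lemma eigvec_exists: fixes A :: "complex mat" assumes A: "A \<in> carrier_mat (Suc m) (Suc m)"
  shows "\<exists>v lam. v \<in> carrier_vec (Suc m) \<and> v \<bullet>c v = 1 \<and> A *\<^sub>v v = lam \<cdot>\<^sub>v v"
proof -
  obtain as where cp: "char_poly A = (\<Prod> a \<leftarrow> as. [:- a, 1:])" and len: "length as = Suc m"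
    using char_poly_factorized[OF A] by blast
  then obtain a rest where as: "as = a # rest" by (cases as, auto)
  have "poly (char_poly A) a = 0" unfolding cp as by (simp add: poly_prod_list)
  hence "eigenvalue A a" using eigenvalue_root_char_poly[OF A] by simp
  then obtain w where ev: "eigenvector A w a" unfolding eigenvalue_def by blast
  hence w: "w \<in> carrier_vec (Suc m)" and w0: "w \<noteq> 0\<^sub>v (Suc m)" and Aw: "A *\<^sub>v w = a \<cdot>\<^sub>v w"
    using A unfolding eigenvector_def by auto
  have pos: "w \<bullet>c w > 0" using w w0 by simp
  define r where "r = Re (w \<bullet>c w)"
  have r: "r > 0" "w \<bullet>c w = complex_of_real r" using pos unfolding r_def
    by (auto simp: less_complex_def complex_eq_iff)
  define v where "v = (1 / complex_of_real (sqrt r)) \<cdot>\<^sub>v w"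
  have v: "v \<in> carrier_vec (Suc m)" using w unfolding v_def by auto
  have "v \<bullet>c v = (1 / complex_of_real (sqrt r)) * cnj (1 / complex_of_real (sqrt r)) * (w \<bullet>c w)"
    unfolding v_def using w by (simp add: conjugate_smult_vec)
  also have "\<dots> = 1" using r by (simp add: field_simps power2_eq_square[symmetric] flip: of_real_power)
  finally have vv: "v \<bullet>c v = 1" .
  have "A *\<^sub>v v = a \<cdot>\<^sub>v v" unfolding v_def using A w Aw
    by (simp add: mult_mat_vec smult_smult_assoc mult.commute)
  with v vv show ?thesis by blast
qed

lemma sum_delta_lt: "(\<Sum>k<n. (if k = j then f k else 0)) = (if j < (n::nat) then f j else (0::complex))"
  by (simp add: sum.delta')

lemma sum_delta_mult: "(\<Sum>b<n. c b * (if a = b then 1 else 0)) = (if a < (n::nat) then c a else (0::complex))"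
  by (simp add: sum.delta if_distrib[where f = "\<lambda>x. _ * x"] cong: if_cong)

lemma sum_delta_mult2: "(\<Sum>b<n. c b * (if b = a then 1 else 0)) = (if a < (n::nat) then c a else (0::complex))"
  by (induction n) (auto simp: less_Suc_eq)

lemma householder: fixes v :: "complex vec" assumes v: "v \<in> carrier_vec n" "v \<bullet>c v = 1" and n: "0 < n"
  shows "\<exists>W. unitary_mat n W \<and> (\<forall>i<n. W $$ (i,0) = v $ i)"
proof -
  define nv where "nv = cmod (v$0)"
  define c where "c = (if v$0 = 0 then 1 else v$0 / complex_of_real nv)"
  have c1: "c * cnj c = 1"
    unfolding c_def nv_def by (auto simp: cnj_mult_self norm_divide)
  have cv: "c * cnj (v$0) = complex_of_real nv" "cnj c * v$0 = complex_of_real nv"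
    unfolding c_def nv_def by (auto simp: cnj_mult_self power2_eq_square mult.commute)
  define u where "u = (\<lambda>i. (if i = 0 then c else 0) - v$i)"
  define s where "s = (\<Sum>i<n. u i * cnj (u i))"
  have vv: "(\<Sum>i<n. v$i * cnj(v$i)) = 1" using v cscalar_sum[OF v(1) v(1)] by simp
  have pt: "u i * cnj (u i) = (if i = 0 then 1 - 2 * complex_of_real nv else 0) + v$i * cnj(v$i)" for i
    unfolding u_def using c1 cv by (auto simp: algebra_simps)
  have s_eq: "s = 2 - 2 * complex_of_real nv"
    unfolding s_def pt sum.distrib vv using n by (simp add: sum.delta)
  define a where "a = 2 / s"
  have a_real: "cnj a = a" unfolding a_def s_eq by simp
  have key: "a * a * s - 2 * a = 0" unfolding a_def by (cases "s = 0", auto)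
  define R where "R = mat n n (\<lambda>(i,j). (if i = j then 1 else 0) - a * u i * cnj (u j))"
  define W where "W = c \<cdot>\<^sub>m R"
  have R: "R \<in> carrier_mat n n" unfolding R_def by auto
  have Rh: "cnj (R $$ (j,i)) = R $$ (i,j)" if "i < n" "j < n" for i j
    using that a_real unfolding R_def by auto
  have RR: "(\<Sum>k<n. R $$ (i,k) * R $$ (k,j)) = (if i = j then 1 else 0)" if ij: "i < n" "j < n" for i j
  proof -
    have "(\<Sum>k<n. R $$ (i,k) * R $$ (k,j)) = (\<Sum>k<n. (if k = j then (if i = k then 1 else 0) else 0)
        - (if k = j then a * u i * cnj (u k) else 0) - (if k = i then a * u k * cnj (u j) else 0)
        + a * a * u i * cnj (u j) * (u k * cnj (u k)))"
      using ij unfolding R_def by (intro sum.cong refl, auto simp: algebra_simps)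
    also have "\<dots> = (if i = j then 1 else 0) - a * u i * cnj (u j) - a * u i * cnj (u j)
        + a * a * u i * cnj (u j) * s"
      unfolding sum.distrib sum_subtractf sum_delta_lt s_def sum_distrib_left[symmetric] using ij by simp
    also have "\<dots> = (if i = j then 1 else 0) + u i * cnj (u j) * (a * a * s - 2 * a)"
      by (simp add: algebra_simps)
    finally show ?thesis using key by simp
  qed
  have WW1: "mat_adjoint W * W = 1\<^sub>m n"
  proof (rule eq_matI)
    fix i j assume "i < dim_row (1\<^sub>m n :: complex mat)" "j < dim_col (1\<^sub>m n :: complex mat)"
    hence ij: "i < n" "j < n" by auto
    have "(mat_adjoint W * W) $$ (i,j) = (\<Sum>k<n. cnj (W $$ (k,i)) * W $$ (k,j))"
      using ij R unfolding W_def by (simp add: scalar_prod_def atLeast0LessThan)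
    also have "\<dots> = (\<Sum>k<n. (c * cnj c) * (R $$ (i,k) * R $$ (k,j)))"
      using ij R Rh unfolding W_def by (intro sum.cong refl, auto simp: algebra_simps)
    also have "\<dots> = (if i = j then 1 else 0)" using RR[OF ij] c1 by (simp add: sum_distrib_left[symmetric])
    finally show "(mat_adjoint W * W) $$ (i,j) = 1\<^sub>m n $$ (i,j)" using ij by simp
  qed (insert R, auto simp: W_def)
  have WW2: "W * mat_adjoint W = 1\<^sub>m n"
  proof (rule eq_matI)
    fix i j assume "i < dim_row (1\<^sub>m n :: complex mat)" "j < dim_col (1\<^sub>m n :: complex mat)"
    hence ij: "i < n" "j < n" by auto
    have "(W * mat_adjoint W) $$ (i,j) = (\<Sum>k<n. W $$ (i,k) * cnj (W $$ (j,k)))"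
      using ij R unfolding W_def by (simp add: scalar_prod_def atLeast0LessThan)
    also have "\<dots> = (\<Sum>k<n. (c * cnj c) * (R $$ (i,k) * R $$ (k,j)))"
      using ij R Rh unfolding W_def by (intro sum.cong refl, auto simp: algebra_simps)
    also have "\<dots> = (if i = j then 1 else 0)" using RR[OF ij] c1 by (simp add: sum_distrib_left[symmetric])
    finally show "(W * mat_adjoint W) $$ (i,j) = 1\<^sub>m n $$ (i,j)" using ij by simp
  qed (insert R, auto simp: W_def)
  have col: "W $$ (i,0) = v $ i" if i: "i < n" for i
  proof -
    have "W $$ (i,0) = c * (if i = 0 then 1 else 0) - a * (c * cnj (u 0)) * u i"
      using i n unfolding W_def R_def by (auto simp: algebra_simps)
    also have "c * cnj (u 0) = 1 - complex_of_real nv" unfolding u_def using c1 cv by (simp add: algebra_simps)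
    finally have W0: "W $$ (i,0) = c * (if i = 0 then 1 else 0) - a * (1 - complex_of_real nv) * u i" .
    show ?thesis
    proof (cases "s = 0")
      case True
      hence "u i = 0" using sum_sq_zero[of u n i] i unfolding s_def by simp
      thus ?thesis using W0 unfolding u_def by (auto split: if_splits)
    next
      case False
      hence "a * (1 - complex_of_real nv) = 1" unfolding a_def s_eq by (auto simp: field_simps)
      thus ?thesis using W0 unfolding u_def by auto
    qed
  qed
  have "unitary_mat n W" unfolding unitary_mat_def using WW1 WW2 R by (auto simp: W_def)
  thus ?thesis using col by blast
qed

lemma unitaryD: "unitary_mat n U \<Longrightarrow> U \<in> carrier_mat n n"
  "unitary_mat n U \<Longrightarrow> mat_adjoint U * U = 1\<^sub>m n" "unitary_mat n U \<Longrightarrow> U * mat_adjoint U = 1\<^sub>m n"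
  unfolding unitary_mat_def by auto

lemma unitary_cancel1: assumes "unitary_mat n U" "X \<in> carrier_mat n k" shows "mat_adjoint U * (U * X) = X"
proof -
  have "mat_adjoint U * (U * X) = (mat_adjoint U * U) * X"
    using unitaryD[OF assms(1)] assms(2) by (intro assoc_mult_mat[symmetric], auto)
  thus ?thesis using unitaryD[OF assms(1)] assms(2) by simp
qed

lemma unitary_cancel2: assumes "unitary_mat n U" "X \<in> carrier_mat n k" shows "U * (mat_adjoint U * X) = X"
proof -
  have "U * (mat_adjoint U * X) = (U * mat_adjoint U) * X"
    using unitaryD[OF assms(1)] assms(2) by (intro assoc_mult_mat[symmetric], auto)
  thus ?thesis using unitaryD[OF assms(1)] assms(2) by simp
qed

lemma unitary_sum1: assumes "unitary_mat n U" "i < n" "j < n"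
  shows "(\<Sum>k<n. cnj (U $$ (k,i)) * U $$ (k,j)) = (if i = j then 1 else 0)"
proof -
  have "(mat_adjoint U * U) $$ (i,j) = (\<Sum>k<n. cnj (U $$ (k,i)) * U $$ (k,j))"
    using unitaryD(1)[OF assms(1)] assms(2,3) by (simp add: scalar_prod_def atLeast0LessThan)
  thus ?thesis using unitaryD(2)[OF assms(1)] assms(2,3) index_one_mat(1) by metis
qed

lemma unitary_sum2: assumes "unitary_mat n U" "i < n" "j < n"
  shows "(\<Sum>k<n. U $$ (i,k) * cnj (U $$ (j,k))) = (if i = j then 1 else 0)"
proof -
  have "(U * mat_adjoint U) $$ (i,j) = (\<Sum>k<n. U $$ (i,k) * cnj (U $$ (j,k)))"
    using unitaryD(1)[OF assms(1)] assms(2,3) by (simp add: scalar_prod_def atLeast0LessThan)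
  thus ?thesis using unitaryD(3)[OF assms(1)] assms(2,3) index_one_mat(1) by metis
qed

theorem spectral: fixes H :: "complex mat" assumes "hermitian_mat n H"
  shows "\<exists>V \<mu>. unitary_mat n V \<and> H = V * mat_diag n (\<lambda>i. complex_of_real (\<mu> i)) * mat_adjoint V"
  using assms
proof (induction n arbitrary: H)
  case 0
  hence H: "H \<in> carrier_mat 0 0" unfolding hermitian_mat_def by auto
  have "unitary_mat 0 (1\<^sub>m 0)" unfolding unitary_mat_def by auto
  moreover have "H = 1\<^sub>m 0 * mat_diag 0 (\<lambda>i. complex_of_real ((\<lambda>i. 0) i)) * mat_adjoint (1\<^sub>m 0)"
    using H by (intro eq_matI, auto)
  ultimately show ?case by (intro exI conjI)
next
  case (Suc m)
  let ?n = "Suc m"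
  have H: "H \<in> carrier_mat ?n ?n" and Hh: "mat_adjoint H = H" using Suc.prems unfolding hermitian_mat_def by auto
  obtain v lam where v: "v \<in> carrier_vec ?n" "v \<bullet>c v = 1" and Hv: "H *\<^sub>v v = lam \<cdot>\<^sub>v v"
    using eigvec_exists[OF H] by blast
  obtain W where Wu: "unitary_mat ?n W" and Wc: "\<And>i. i < ?n \<Longrightarrow> W $$ (i,0) = v $ i"
    using householder[OF v] by blast
  have W: "W \<in> carrier_mat ?n ?n" using unitaryD[OF Wu] by auto
  define K where "K = mat_adjoint W * (H * W)"
  have K: "K \<in> carrier_mat ?n ?n" unfolding K_def using W H by auto
  have colW: "col W 0 = v" using W v Wc by (intro eq_vecI, auto)
  have HW0: "(H * W) $$ (p,0) = lam * W $$ (p,0)" if p: "p < ?n" for p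
  proof -
    have "(H * W) $$ (p,0) = (H *\<^sub>v col W 0) $ p" using p H W by simp
    also have "\<dots> = lam * W $$ (p,0)" unfolding colW Hv using p v Wc by simp
    finally show ?thesis .
  qed
  have K0: "K $$ (i,0) = (if i = 0 then lam else 0)" if i: "i < ?n" for i
  proof -
    have "K $$ (i,0) = (\<Sum>p<?n. cnj (W $$ (p,i)) * (H * W) $$ (p,0))"
      unfolding K_def using i W H by (simp add: scalar_prod_def atLeast0LessThan)
    also have "\<dots> = lam * (\<Sum>p<?n. cnj (W $$ (p,i)) * W $$ (p,0))"
      by (simp add: HW0 sum_distrib_left algebra_simps)
    also have "\<dots> = (if i = 0 then lam else 0)" using unitary_sum1[OF Wu i, of 0] by simp
    finally show ?thesis .
  qed
  have Kadj: "mat_adjoint K = K"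
  proof -
    have "mat_adjoint K = mat_adjoint (H * W) * mat_adjoint (mat_adjoint W)"
      unfolding K_def using W H by (intro adj_mult, auto)
    also have "\<dots> = (mat_adjoint W * H) * W" using W H Hh by (simp add: adj_mult[of H ?n ?n W ?n])
    also have "\<dots> = K" unfolding K_def using W H by (intro assoc_mult_mat[of _ ?n ?n _ ?n _ ?n], auto)
    finally show ?thesis .
  qed
  have Kh: "cnj (K $$ (j,i)) = K $$ (i,j)" if "i < ?n" "j < ?n" for i j
    using Kadj that K by (metis adj_index carrier_matD)
  have lamr: "lam = complex_of_real (Re lam)"
    using Kh[of 0 0] K0[of 0] by (simp add: complex_eq_iff)
  define H' where "H' = mat m m (\<lambda>(i,j). K $$ (Suc i, Suc j))"
  have H'h: "hermitian_mat m H'" unfolding H'_def by (rule hermitianI, auto simp: Kh)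
  obtain V' \<mu>' where V'u: "unitary_mat m V'" and H'eq: "H' = V' * mat_diag m (\<lambda>i. complex_of_real (\<mu>' i)) * mat_adjoint V'"
    using Suc.IH[OF H'h] by blast
  have V': "V' \<in> carrier_mat m m" using unitaryD[OF V'u] by auto
  define E where "E = mat ?n ?n (\<lambda>(i,j). if i = 0 \<and> j = 0 then 1 else if i = 0 \<or> j = 0 then 0 else V' $$ (i - 1, j - 1))"
  have E: "E \<in> carrier_mat ?n ?n" unfolding E_def by auto
  have EE1: "mat_adjoint E * E = 1\<^sub>m ?n"
  proof (rule eq_matI)
    fix i j assume "i < dim_row (1\<^sub>m ?n :: complex mat)" "j < dim_col (1\<^sub>m ?n :: complex mat)"
    hence ij: "i < ?n" "j < ?n" by auto
    have "(mat_adjoint E * E) $$ (i,j) = (\<Sum>k<?n. cnj (E $$ (k,i)) * E $$ (k,j))"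
      using ij E by (simp add: scalar_prod_def atLeast0LessThan)
    also have "\<dots> = cnj (E $$ (0,i)) * E $$ (0,j) + (\<Sum>k<m. cnj (E $$ (Suc k,i)) * E $$ (Suc k,j))"
      by (rule sum.lessThan_Suc_shift)
    also have "\<dots> = (if i = j then 1 else 0)"
    proof (cases i)
      case 0 thus ?thesis using ij unfolding E_def by auto
    next
      case (Suc i') note i' = this
      show ?thesis
      proof (cases j)
        case 0 thus ?thesis using ij i' unfolding E_def by auto
      next
        case (Suc j')
        thus ?thesis using ij i' unitary_sum1[OF V'u, of i' j'] unfolding E_def by auto
      qed
    qed
    finally show "(mat_adjoint E * E) $$ (i,j) = 1\<^sub>m ?n $$ (i,j)" using ij by simp
  qed (insert E, auto)
  have EE2: "E * mat_adjoint E = 1\<^sub>m ?n"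
  proof (rule eq_matI)
    fix i j assume "i < dim_row (1\<^sub>m ?n :: complex mat)" "j < dim_col (1\<^sub>m ?n :: complex mat)"
    hence ij: "i < ?n" "j < ?n" by auto
    have "(E * mat_adjoint E) $$ (i,j) = (\<Sum>k<?n. E $$ (i,k) * cnj (E $$ (j,k)))"
      using ij E by (simp add: scalar_prod_def atLeast0LessThan)
    also have "\<dots> = E $$ (i,0) * cnj (E $$ (j,0)) + (\<Sum>k<m. E $$ (i, Suc k) * cnj (E $$ (j, Suc k)))"
      by (rule sum.lessThan_Suc_shift)
    also have "\<dots> = (if i = j then 1 else 0)"
    proof (cases i)
      case 0 thus ?thesis using ij unfolding E_def by auto
    next
      case (Suc i') note i' = this
      show ?thesis
      proof (cases j)
        case 0 thus ?thesis using ij i' unfolding E_def by auto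
      next
        case (Suc j')
        thus ?thesis using ij i' unitary_sum2[OF V'u, of i' j'] unfolding E_def by auto
      qed
    qed
    finally show "(E * mat_adjoint E) $$ (i,j) = 1\<^sub>m ?n $$ (i,j)" using ij by simp
  qed (insert E, auto)
  have Eu: "unitary_mat ?n E" unfolding unitary_mat_def using E EE1 EE2 by auto
  define \<mu> where "\<mu> = (\<lambda>i. if i = 0 then Re lam else \<mu>' (i - 1))"
  let ?D = "mat_diag ?n (\<lambda>i. complex_of_real (\<mu> i))"
  have KE: "K = E * ?D * mat_adjoint E"
  proof (rule eq_matI)
    fix i j assume "i < dim_row (E * ?D * mat_adjoint E)" "j < dim_col (E * ?D * mat_adjoint E)"
    hence ij: "i < ?n" "j < ?n" using E by auto
    have "(E * ?D * mat_adjoint E) $$ (i,j) = (\<Sum>a<?n. E $$ (i,a) * complex_of_real (\<mu> a) * cnj (E $$ (j,a)))"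
      by (rule udiag_index[OF E ij])
    also have "\<dots> = E $$ (i,0) * complex_of_real (\<mu> 0) * cnj (E $$ (j,0)) +
        (\<Sum>a<m. E $$ (i,Suc a) * complex_of_real (\<mu> (Suc a)) * cnj (E $$ (j,Suc a)))"
      by (rule sum.lessThan_Suc_shift)
    also have "\<dots> = K $$ (i,j)"
    proof (cases i)
      case 0
      show ?thesis
      proof (cases j)
        case 0 thus ?thesis using \<open>i = 0\<close> K0[of 0] lamr unfolding E_def \<mu>_def by auto
      next
        case (Suc j')
        have "K $$ (i,j) = cnj (K $$ (j,i))" using Kh ij by simp
        also have "\<dots> = 0" using K0[of j] ij Suc \<open>i = 0\<close> by simp
        finally show ?thesis using ij Suc \<open>i = 0\<close> unfolding E_def by auto
      qed
    next
      case (Suc i') note i' = this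
      show ?thesis
      proof (cases j)
        case 0 thus ?thesis using ij i' K0[of i] unfolding E_def by auto
      next
        case (Suc j')
        have "K $$ (i,j) = H' $$ (i', j')" using ij i' Suc unfolding H'_def by auto
        also have "\<dots> = (\<Sum>a<m. V' $$ (i',a) * complex_of_real (\<mu>' a) * cnj (V' $$ (j',a)))"
          unfolding H'eq using ij i' Suc by (intro udiag_index[OF V'], auto)
        finally show ?thesis using ij i' Suc unfolding E_def \<mu>_def by auto
      qed
    qed
    finally show "K $$ (i,j) = (E * ?D * mat_adjoint E) $$ (i,j)" by simp
  qed (insert E K, auto)
  have "H = W * K * mat_adjoint W"
  proof -
    have X: "(H * W) * mat_adjoint W = H"
      using W H unitaryD(3)[OF Wu] by (subst assoc_mult_mat[of _ ?n ?n _ ?n _ ?n], auto)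
    have "K * mat_adjoint W = mat_adjoint W * ((H * W) * mat_adjoint W)"
      unfolding K_def using W H by (intro assoc_mult_mat[of _ ?n ?n _ ?n _ ?n], auto)
    hence KW: "K * mat_adjoint W = mat_adjoint W * H" unfolding X .
    have "W * K * mat_adjoint W = W * (K * mat_adjoint W)"
      using W K by (intro assoc_mult_mat[of _ ?n ?n _ ?n _ ?n], auto)
    also have "\<dots> = H" unfolding KW using unitary_cancel2[OF Wu H] .
    finally show ?thesis by simp
  qed
  also have "\<dots> = (W * E) * ?D * mat_adjoint (W * E)"
  proof -
    have Ea: "mat_adjoint E \<in> carrier_mat ?n ?n" and Wa: "mat_adjoint W \<in> carrier_mat ?n ?n"
      and Dc: "?D \<in> carrier_mat ?n ?n" using W E by auto
    have 1: "W * (E * ?D * mat_adjoint E) * mat_adjoint W = W * ((E * ?D * mat_adjoint E) * mat_adjoint W)"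
      using W E Ea Wa Dc by (intro assoc_mult_mat[of _ ?n ?n _ ?n _ ?n], auto)
    have 2: "(E * ?D * mat_adjoint E) * mat_adjoint W = (E * ?D) * (mat_adjoint E * mat_adjoint W)"
      using W E Ea Wa Dc by (intro assoc_mult_mat[of _ ?n ?n _ ?n _ ?n], auto)
    have 3: "W * ((E * ?D) * (mat_adjoint E * mat_adjoint W)) = (W * (E * ?D)) * (mat_adjoint E * mat_adjoint W)"
      using W E Ea Wa Dc by (intro assoc_mult_mat[of _ ?n ?n _ ?n _ ?n, symmetric], auto)
    have 4: "W * (E * ?D) = W * E * ?D"
      using W E Ea Wa Dc by (intro assoc_mult_mat[of _ ?n ?n _ ?n _ ?n, symmetric], auto)
    show ?thesis unfolding KE 1 2 3 4 using W E by (simp add: adj_mult[of W ?n ?n E ?n])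
  qed
  finally have "H = (W * E) * ?D * mat_adjoint (W * E)" .
  moreover have "unitary_mat ?n (W * E)" by (rule unitary_mult[OF Wu Eu])
  ultimately show ?case by blast
qed

definition udm :: "nat \<Rightarrow> complex mat \<Rightarrow> (nat \<Rightarrow> complex) \<Rightarrow> complex mat" where
  "udm n V f = V * mat_diag n f * mat_adjoint V"

lemma udm_carrier[simp]: "V \<in> carrier_mat n n \<Longrightarrow> udm n V f \<in> carrier_mat n n"
  unfolding udm_def by auto

lemma udm_dim[simp]: "dim_row (udm n V f) = dim_row V" "dim_col (udm n V f) = dim_row V"
  unfolding udm_def by auto

lemma udm_index: "V \<in> carrier_mat n n \<Longrightarrow> i < n \<Longrightarrow> j < n \<Longrightarrow>
  udm n V f $$ (i,j) = (\<Sum>a<n. V $$ (i,a) * f a * cnj (V $$ (j,a)))"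
  unfolding udm_def by (rule udiag_index)

lemma udm_mult: assumes U: "unitary_mat n V"
  shows "udm n V f * udm n V g = udm n V (\<lambda>a. f a * g a)"
proof (rule eq_matI)
  have V: "V \<in> carrier_mat n n" using unitaryD[OF U] by auto
  fix i j assume "i < dim_row (udm n V (\<lambda>a. f a * g a))" "j < dim_col (udm n V (\<lambda>a. f a * g a))"
  hence ij: "i < n" "j < n" using V by (auto simp: carrier_matD)
  have "(udm n V f * udm n V g) $$ (i,j) = (\<Sum>p<n. udm n V f $$ (i,p) * udm n V g $$ (p,j))"
    using V ij by (simp add: scalar_prod_def atLeast0LessThan)
  also have "\<dots> = (\<Sum>p<n. (\<Sum>a<n. V $$ (i,a) * f a * cnj (V $$ (p,a))) * (\<Sum>b<n. V $$ (p,b) * g b * cnj (V $$ (j,b))))"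
    using V ij by (intro sum.cong refl, simp add: udm_index)
  also have "\<dots> = (\<Sum>p<n. \<Sum>a<n. \<Sum>b<n. (V $$ (i,a) * f a * g b * cnj (V $$ (j,b))) * (cnj (V $$ (p,a)) * V $$ (p,b)))"
    by (simp add: sum_product algebra_simps)
  also have "\<dots> = (\<Sum>a<n. \<Sum>b<n. \<Sum>p<n. (V $$ (i,a) * f a * g b * cnj (V $$ (j,b))) * (cnj (V $$ (p,a)) * V $$ (p,b)))"
    by (subst sum.swap, rule sum.cong[OF refl], subst sum.swap, rule refl)
  also have "\<dots> = (\<Sum>a<n. \<Sum>b<n. (V $$ (i,a) * f a * g b * cnj (V $$ (j,b))) * (if a = b then 1 else 0))"
    by (intro sum.cong refl, simp add: sum_distrib_left[symmetric] unitary_sum1[OF U])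
  also have "\<dots> = (\<Sum>a<n. V $$ (i,a) * (f a * g a) * cnj (V $$ (j,a)))"
    by (intro sum.cong refl, subst sum_delta_mult, simp)
  also have "\<dots> = udm n V (\<lambda>a. f a * g a) $$ (i,j)" using V ij by (simp add: udm_index)
  finally show "(udm n V f * udm n V g) $$ (i,j) = udm n V (\<lambda>a. f a * g a) $$ (i,j)" .
qed (insert unitaryD[OF assms], auto simp: carrier_matD)

lemma udm_smult: assumes "V \<in> carrier_mat n n" shows "c \<cdot>\<^sub>m udm n V f = udm n V (\<lambda>a. c * f a)"
  using assms by (intro eq_matI, auto simp: udm_index sum_distrib_left algebra_simps carrier_matD)

lemma udm_one: assumes U: "unitary_mat n V" shows "udm n V (\<lambda>a. 1) = 1\<^sub>m n"
  using unitaryD[OF U] by (intro eq_matI, auto simp: udm_index unitary_sum2[OF U] carrier_matD)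

lemma udm_pow: assumes U: "unitary_mat n V" shows "udm n V f ^\<^sub>m k = udm n V (\<lambda>a. f a ^ k)"
proof (induction k)
  case 0 thus ?case using udm_one[OF U] unitaryD[OF U] by (simp add: carrier_matD)
next
  case (Suc k) thus ?case by (simp add: udm_mult[OF U] mult.commute)
qed

lemma mexp_udm: assumes U: "unitary_mat n V" shows "mexp (udm n V f) = udm n V (\<lambda>a. exp (f a))"
proof (rule eq_matI)
  have V: "V \<in> carrier_mat n n" using unitaryD[OF U] by auto
  fix i j assume "i < dim_row (udm n V (\<lambda>a. exp (f a)))" "j < dim_col (udm n V (\<lambda>a. exp (f a)))"
  hence ij: "i < n" "j < n" using V by (auto simp: carrier_matD)
  have "(\<lambda>k. (udm n V f ^\<^sub>m k) $$ (i,j) / of_nat (fact k)) =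
     (\<lambda>k. \<Sum>a<n. V $$ (i,a) * cnj (V $$ (j,a)) * (f a ^ k /\<^sub>R fact k))"
    using V ij by (auto simp: udm_pow[OF U] udm_index sum_divide_distrib scaleR_conv_of_real divide_inverse algebra_simps sum_distrib_left)
  moreover have "(\<lambda>k. \<Sum>a<n. V $$ (i,a) * cnj (V $$ (j,a)) * (f a ^ k /\<^sub>R fact k)) sums
      (\<Sum>a<n. V $$ (i,a) * cnj (V $$ (j,a)) * exp (f a))"
    by (intro sums_sum sums_mult exp_converges)
  ultimately have "(\<lambda>k. (udm n V f ^\<^sub>m k) $$ (i,j) / of_nat (fact k)) sums
      (\<Sum>a<n. V $$ (i,a) * cnj (V $$ (j,a)) * exp (f a))" by simp
  hence "(\<Sum>k. (udm n V f ^\<^sub>m k) $$ (i,j) / of_nat (fact k)) = (\<Sum>a<n. V $$ (i,a) * cnj (V $$ (j,a)) * exp (f a))"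
    by (rule sums_unique[symmetric])
  thus "mexp (udm n V f) $$ (i,j) = udm n V (\<lambda>a. exp (f a)) $$ (i,j)"
    unfolding mexp_def using V ij by (simp add: udm_index algebra_simps)
qed (insert unitaryD[OF assms], auto simp: mexp_def carrier_matD)

definition cj :: "complex mat \<Rightarrow> complex mat \<Rightarrow> complex mat" where
  "cj V X = V * X * mat_adjoint V"

lemma cj_carrier[simp]: "V \<in> carrier_mat n n \<Longrightarrow> X \<in> carrier_mat n n \<Longrightarrow> cj V X \<in> carrier_mat n n"
  unfolding cj_def by auto

lemma cj_dim[simp]: "dim_row (cj V X) = dim_row V" "dim_col (cj V X) = dim_row V"
  unfolding cj_def by auto

lemma cj_index: assumes V: "V \<in> carrier_mat n n" and X: "X \<in> carrier_mat n n" and ij: "i < n" "j < n"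
  shows "cj V X $$ (i,j) = (\<Sum>a<n. \<Sum>b<n. V $$ (i,a) * X $$ (a,b) * cnj (V $$ (j,b)))"
proof -
  have "cj V X $$ (i,j) = (\<Sum>b<n. (V * X) $$ (i,b) * cnj (V $$ (j,b)))"
    unfolding cj_def using V X ij by (simp add: scalar_prod_def atLeast0LessThan)
  also have "\<dots> = (\<Sum>b<n. \<Sum>a<n. V $$ (i,a) * X $$ (a,b) * cnj (V $$ (j,b)))"
    using V X ij by (intro sum.cong refl, simp add: scalar_prod_def atLeast0LessThan sum_distrib_right)
  also have "\<dots> = (\<Sum>a<n. \<Sum>b<n. V $$ (i,a) * X $$ (a,b) * cnj (V $$ (j,b)))"
    by (rule sum.swap)
  finally show ?thesis .
qed

lemma cj_mult: assumes U: "unitary_mat n V" and X: "X \<in> carrier_mat n n" and Y: "Y \<in> carrier_mat n n"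
  shows "cj V X * cj V Y = cj V (X * Y)"
proof -
  have V: "V \<in> carrier_mat n n" and Va: "mat_adjoint V \<in> carrier_mat n n" using unitaryD[OF U] by auto
  have 1: "(V * X * mat_adjoint V) * (V * Y * mat_adjoint V) = (V * X) * (mat_adjoint V * (V * Y * mat_adjoint V))"
    using V Va X Y by (intro assoc_mult_mat[of _ n n _ n _ n], auto)
  have 2: "V * Y * mat_adjoint V = V * (Y * mat_adjoint V)"
    using V Va X Y by (intro assoc_mult_mat[of _ n n _ n _ n], auto)
  have 3: "mat_adjoint V * (V * (Y * mat_adjoint V)) = Y * mat_adjoint V"
    using unitary_cancel1[OF U, of "Y * mat_adjoint V" n] Y Va by auto
  have 4: "(V * X) * (Y * mat_adjoint V) = ((V * X) * Y) * mat_adjoint V"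
    using V Va X Y by (intro assoc_mult_mat[of _ n n _ n _ n, symmetric], auto)
  have 5: "(V * X) * Y = V * (X * Y)"
    using V Va X Y by (intro assoc_mult_mat[of _ n n _ n _ n], auto)
  have "cj V X * cj V Y = (V * X) * (mat_adjoint V * (V * Y * mat_adjoint V))" unfolding cj_def by (rule 1)
  also have "mat_adjoint V * (V * Y * mat_adjoint V) = Y * mat_adjoint V" using 2 3 by simp
  also have "(V * X) * (Y * mat_adjoint V) = V * (X * Y) * mat_adjoint V" using 4 5 by simp
  finally show ?thesis unfolding cj_def .
qed

lemma cj_minus: assumes V: "V \<in> carrier_mat n n" and X: "X \<in> carrier_mat n n" and Y: "Y \<in> carrier_mat n n"
  shows "cj V X - cj V Y = cj V (X - Y)"
  using assms by (intro eq_matI, auto simp: cj_index carrier_matD sum_subtractf right_diff_distrib left_diff_distrib minus_carrier_mat)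

lemma cj_add: assumes V: "V \<in> carrier_mat n n" and X: "X \<in> carrier_mat n n" and Y: "Y \<in> carrier_mat n n"
  shows "cj V X + cj V Y = cj V (X + Y)"
  using assms by (intro eq_matI, auto simp: cj_index carrier_matD sum.distrib distrib_left distrib_right)

lemma cj_smult: assumes V: "V \<in> carrier_mat n n" and X: "X \<in> carrier_mat n n"
  shows "c \<cdot>\<^sub>m cj V X = cj V (c \<cdot>\<^sub>m X)"
  using assms by (intro eq_matI, auto simp: cj_index carrier_matD sum_distrib_left mult.assoc mult.left_commute)

lemma cj_back: assumes U: "unitary_mat n V" and R: "R \<in> carrier_mat n n"
  shows "cj V (mat_adjoint V * R * V) = R"
proof -
  have V: "V \<in> carrier_mat n n" and Va: "mat_adjoint V \<in> carrier_mat n n" using unitaryD[OF U] by auto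
  have "cj V (mat_adjoint V * R * V) = V * (mat_adjoint V * (R * V)) * mat_adjoint V"
    unfolding cj_def using V Va R by (subst assoc_mult_mat[of _ n n _ n _ n], auto)
  also have "\<dots> = R * V * mat_adjoint V" using unitary_cancel2[OF U, of "R * V" n] V R by auto
  also have "\<dots> = R" using V Va R unitaryD(3)[OF U] by (subst assoc_mult_mat[of _ n n _ n _ n], auto)
  finally show ?thesis .
qed

lemma udm_cj: "udm n V f = cj V (mat_diag n f)" unfolding udm_def cj_def ..

section \<open>Time averages\<close>

lemma exp_int_cont: "continuous_on S (\<lambda>t::real. C * exp (t *\<^sub>R (A::complex)))"
  by (intro continuous_intros)

lemma exp_integrable: "(\<lambda>t::real. C * exp (t *\<^sub>R (A::complex))) integrable_on {a..b}"
  by (rule integrable_continuous_interval, rule exp_int_cont)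

lemma exp_has_integral: assumes A: "A \<noteq> 0" and s: "0 \<le> s"
  shows "((\<lambda>t::real. C * exp (t *\<^sub>R (A::complex))) has_integral (C * (exp (s *\<^sub>R A) - 1) / A)) {0..s}"
proof -
  have "((\<lambda>t. C * exp (t *\<^sub>R A) * A / A) has_integral (C * exp (s *\<^sub>R A) / A - C * exp (0 *\<^sub>R A) / A)) {0..s}"
  proof (rule fundamental_theorem_of_calculus[OF s])
    fix x :: real
    show "((\<lambda>t. C * exp (t *\<^sub>R A) / A) has_vector_derivative C * exp (x *\<^sub>R A) * A / A) (at x within {0..s})"
      using exp_scaleR_has_vector_derivative_right[of A x "{0..s}"]
      by (intro derivative_eq_intros) (auto simp: has_vector_derivative_def intro: has_derivative_mult_right)
  qed
  thus ?thesis using A by (simp add: field_simps)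
qed

lemma avg_exp: fixes \<omega> :: real and C :: complex
  shows "((\<lambda>s. (1 / complex_of_real s) * integral {0..s} (\<lambda>t. C * exp (t *\<^sub>R (\<i> * complex_of_real \<omega>))))
          \<longlongrightarrow> (if \<omega> = 0 then C else 0)) at_top"
proof (cases "\<omega> = 0")
  case True
  have "eventually (\<lambda>s. (1 / complex_of_real s) * integral {0..s} (\<lambda>t. C * exp (t *\<^sub>R (\<i> * complex_of_real \<omega>))) = C) at_top"
    using eventually_gt_at_top[of 0]
  proof (rule eventually_mono)
    fix s :: real assume "s > 0"
    thus "(1 / complex_of_real s) * integral {0..s} (\<lambda>t. C * exp (t *\<^sub>R (\<i> * complex_of_real \<omega>))) = C"
      using True by (simp add: scaleR_conv_of_real)
  qed
  thus ?thesis using True by (simp add: tendsto_eventually)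
next
  case False
  let ?A = "\<i> * complex_of_real \<omega>"
  have A: "?A \<noteq> 0" using False by simp
  let ?K = "2 * cmod C / cmod ?A"
  have ev: "eventually (\<lambda>s. norm ((1 / complex_of_real s) * integral {0..s} (\<lambda>t. C * exp (t *\<^sub>R ?A))) \<le> ?K * inverse s) at_top"
    using eventually_gt_at_top[of 0]
  proof (rule eventually_mono)
    fix s :: real assume s: "s > 0"
    have I: "integral {0..s} (\<lambda>t. C * exp (t *\<^sub>R ?A)) = C * (exp (s *\<^sub>R ?A) - 1) / ?A"
      by (rule integral_unique[OF exp_has_integral[OF A]]) (use s in simp)
    have e1: "norm (exp (s *\<^sub>R ?A)) = 1"
      proof -
      have "s *\<^sub>R ?A = \<i> * complex_of_real (s * \<omega>)" by (simp add: scaleR_conv_of_real)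
      thus ?thesis by (simp only: norm_exp_i_times)
    qed
    have "norm (exp (s *\<^sub>R ?A) - 1) \<le> 2"
      using norm_triangle_ineq4[of "exp (s *\<^sub>R ?A)" 1] e1 by simp
    hence bnd: "norm (C * (exp (s *\<^sub>R ?A) - 1) / ?A) \<le> ?K"
    proof -
      assume b2: "norm (exp (s *\<^sub>R ?A) - 1) \<le> 2"
      have "norm (C * (exp (s *\<^sub>R ?A) - 1) / ?A) = cmod C * norm (exp (s *\<^sub>R ?A) - 1) / cmod ?A"
        by (simp only: norm_mult norm_divide)
      also have "\<dots> \<le> cmod C * 2 / cmod ?A"
        by (intro divide_right_mono mult_left_mono b2) auto
      finally show ?thesis by (simp add: mult.commute)
    qed
    have "norm ((1 / complex_of_real s) * (C * (exp (s *\<^sub>R ?A) - 1) / ?A)) = norm (C * (exp (s *\<^sub>R ?A) - 1) / ?A) / s"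
      using s by (simp only: norm_mult norm_divide norm_one, simp)
    also have "\<dots> \<le> ?K / s" using bnd s by (intro divide_right_mono) auto
    also have "\<dots> = ?K * inverse s" by (simp add: divide_inverse)
    finally show "norm ((1 / complex_of_real s) * integral {0..s} (\<lambda>t. C * exp (t *\<^sub>R ?A))) \<le> ?K * inverse s"
      unfolding I .
  qed
  have "((\<lambda>s. ?K * inverse s) \<longlongrightarrow> ?K * 0) at_top"
    by (intro tendsto_mult tendsto_const tendsto_inverse_0_at_top filterlim_ident)
  hence lim0: "((\<lambda>s. ?K * inverse s) \<longlongrightarrow> 0) at_top" by (simp only: mult_zero_right)
  have "((\<lambda>s. (1 / complex_of_real s) * integral {0..s} (\<lambda>t. C * exp (t *\<^sub>R ?A))) \<longlongrightarrow> 0) at_top"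
    by (rule Lim_null_comparison[OF ev lim0])
  thus ?thesis using False by simp
qed

lemma avg_sum: fixes \<omega> :: "'a \<Rightarrow> real" and C :: "'a \<Rightarrow> complex" assumes F: "finite F"
  shows "((\<lambda>s. (1 / complex_of_real s) * integral {0..s} (\<lambda>t. \<Sum>x\<in>F. C x * exp (t *\<^sub>R (\<i> * complex_of_real (\<omega> x)))))
          \<longlongrightarrow> (\<Sum>x\<in>F. if \<omega> x = 0 then C x else 0)) at_top"
proof -
  have eq: "(\<lambda>s. (1 / complex_of_real s) * integral {0..s} (\<lambda>t. \<Sum>x\<in>F. C x * exp (t *\<^sub>R (\<i> * complex_of_real (\<omega> x))))) =
        (\<lambda>s. \<Sum>x\<in>F. (1 / complex_of_real s) * integral {0..s} (\<lambda>t. C x * exp (t *\<^sub>R (\<i> * complex_of_real (\<omega> x)))))"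
    by (rule ext, subst Henstock_Kurzweil_Integration.integral_sum[OF F], auto simp: exp_integrable sum_distrib_left)
  show ?thesis unfolding eq by (rule tendsto_sum, rule avg_exp)
qed

section \<open>The dephasing map\<close>

lemma diag_sandwich: assumes N: "N \<in> carrier_mat n n"
  shows "mat_diag n f * N * mat_diag n g = mat n n (\<lambda>(a,b). f a * N $$ (a,b) * g b)"
proof -
  have 1: "mat_diag n f * N = mat n n (\<lambda>(a,b). f a * N $$ (a,b))" by (rule mat_diag_mult_left[OF N])
  have 2: "mat n n (\<lambda>(a,b). f a * N $$ (a,b)) * mat_diag n g = mat n n (\<lambda>(a,b). f a * N $$ (a,b) * g b)"
    by (subst mat_diag_mult_right[of _ n], auto intro!: eq_matI)
  show ?thesis unfolding 1 2 ..
qed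

lemma udm_sandwich: assumes U: "unitary_mat n V" and R: "R \<in> carrier_mat n n"
  shows "udm n V f * R * udm n V g = cj V (mat n n (\<lambda>(a,b). f a * (mat_adjoint V * R * V) $$ (a,b) * g b))"
proof -
  have V: "V \<in> carrier_mat n n" using unitaryD[OF U] by auto
  define N where "N = mat_adjoint V * R * V"
  have N: "N \<in> carrier_mat n n" unfolding N_def using V R by auto
  have "udm n V f * R * udm n V g = cj V (mat_diag n f) * cj V N * cj V (mat_diag n g)"
    unfolding udm_cj N_def cj_back[OF U R] ..
  also have "cj V (mat_diag n f) * cj V N = cj V (mat_diag n f * N)"
    using N by (simp add: cj_mult[OF U])
  also have "cj V (mat_diag n f * N) * cj V (mat_diag n g) = cj V (mat_diag n f * N * mat_diag n g)"
    using N mult_carrier_mat[OF mat_diag_dim N] by (intro cj_mult[OF U], auto)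
  also have "\<dots> = cj V (mat n n (\<lambda>(a,b). f a * N $$ (a,b) * g b))" by (simp add: diag_sandwich[OF N])
  finally show ?thesis unfolding N_def .
qed

lemma dephase_udm: assumes U: "unitary_mat n V" and R: "R \<in> carrier_mat n n"
  shows "dephase (udm n V (\<lambda>a. complex_of_real (\<mu> a))) R =
    cj V (mat n n (\<lambda>(a,b). if \<mu> a = \<mu> b then (mat_adjoint V * R * V) $$ (a,b) else 0))"
proof (rule eq_matI)
  have V: "V \<in> carrier_mat n n" using unitaryD[OF U] by auto
  define N where "N = mat_adjoint V * R * V"
  have N: "N \<in> carrier_mat n n" unfolding N_def using V R by auto
  let ?H = "udm n V (\<lambda>a. complex_of_real (\<mu> a))"
  fix i j assume "i < dim_row (cj V (mat n n (\<lambda>(a,b). if \<mu> a = \<mu> b then (mat_adjoint V * R * V) $$ (a,b) else 0)))"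
    "j < dim_col (cj V (mat n n (\<lambda>(a,b). if \<mu> a = \<mu> b then (mat_adjoint V * R * V) $$ (a,b) else 0)))"
  hence ij: "i < n" "j < n" using V by (auto simp: carrier_matD)
  define K where "K = (\<lambda>(a,b). V $$ (i,a) * N $$ (a,b) * cnj (V $$ (j,b)))"
  define \<omega> where "\<omega> = (\<lambda>(a::nat,b::nat). \<mu> b - \<mu> a)"
  have integrand: "(mexp ((- \<i> * complex_of_real t) \<cdot>\<^sub>m ?H) * R * mexp ((\<i> * complex_of_real t) \<cdot>\<^sub>m ?H)) $$ (i,j)
     = (\<Sum>p\<in>{..<n} \<times> {..<n}. K p * exp (t *\<^sub>R (\<i> * complex_of_real (\<omega> p))))" for t
  proof -
    have "mexp ((- \<i> * complex_of_real t) \<cdot>\<^sub>m ?H) * R * mexp ((\<i> * complex_of_real t) \<cdot>\<^sub>m ?H) =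
      cj V (mat n n (\<lambda>(a,b). exp (- \<i> * complex_of_real t * complex_of_real (\<mu> a)) * N $$ (a,b) *
          exp (\<i> * complex_of_real t * complex_of_real (\<mu> b))))"
      unfolding udm_smult[OF V] mexp_udm[OF U] udm_sandwich[OF U R] N_def ..
    also have "\<dots> $$ (i,j) = (\<Sum>a<n. \<Sum>b<n. V $$ (i,a) * (exp (- \<i> * complex_of_real t * complex_of_real (\<mu> a)) * N $$ (a,b) *
          exp (\<i> * complex_of_real t * complex_of_real (\<mu> b))) * cnj (V $$ (j,b)))"
      using V ij by (subst cj_index[of _ n], auto)
    also have "\<dots> = (\<Sum>a<n. \<Sum>b<n. K (a,b) * exp (t *\<^sub>R (\<i> * complex_of_real (\<omega> (a,b)))))"
    proof (intro sum.cong refl)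
      fix a b
      have "exp (- \<i> * complex_of_real t * complex_of_real (\<mu> a)) * exp (\<i> * complex_of_real t * complex_of_real (\<mu> b))
         = exp (t *\<^sub>R (\<i> * complex_of_real (\<omega> (a,b))))"
      proof -
        have "exp (- \<i> * complex_of_real t * complex_of_real (\<mu> a)) * exp (\<i> * complex_of_real t * complex_of_real (\<mu> b))
          = exp (- \<i> * complex_of_real t * complex_of_real (\<mu> a) + \<i> * complex_of_real t * complex_of_real (\<mu> b))"
          by (rule mult_exp_exp)
        also have "- \<i> * complex_of_real t * complex_of_real (\<mu> a) + \<i> * complex_of_real t * complex_of_real (\<mu> b)
           = t *\<^sub>R (\<i> * complex_of_real (\<omega> (a,b)))"
          unfolding \<omega>_def by (simp add: scaleR_conv_of_real algebra_simps)
        finally show ?thesis .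
      qed
      thus "V $$ (i,a) * (exp (- \<i> * complex_of_real t * complex_of_real (\<mu> a)) * N $$ (a,b) *
          exp (\<i> * complex_of_real t * complex_of_real (\<mu> b))) * cnj (V $$ (j,b)) =
          K (a,b) * exp (t *\<^sub>R (\<i> * complex_of_real (\<omega> (a,b))))"
        unfolding K_def by (simp add: ac_simps)
    qed
    also have "\<dots> = (\<Sum>p\<in>{..<n} \<times> {..<n}. K p * exp (t *\<^sub>R (\<i> * complex_of_real (\<omega> p))))"
      by (subst sum.cartesian_product, rule sum.cong, auto)
    finally show ?thesis .
  qed
  have lim: "((\<lambda>s. (1 / complex_of_real s) * integral {0..s} (\<lambda>t.
      (mexp ((- \<i> * complex_of_real t) \<cdot>\<^sub>m ?H) * R * mexp ((\<i> * complex_of_real t) \<cdot>\<^sub>m ?H)) $$ (i,j)))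
      \<longlongrightarrow> (\<Sum>p\<in>{..<n} \<times> {..<n}. if \<omega> p = 0 then K p else 0)) at_top"
    unfolding integrand by (rule avg_sum, simp)
  have "dephase ?H R $$ (i,j) = Lim at_top (\<lambda>s. (1 / complex_of_real s) * integral {0..s} (\<lambda>t.
      (mexp ((- \<i> * complex_of_real t) \<cdot>\<^sub>m ?H) * R * mexp ((\<i> * complex_of_real t) \<cdot>\<^sub>m ?H)) $$ (i,j)))"
    unfolding dephase_def using R ij by (subst index_mat(1), auto)
  also have "\<dots> = (\<Sum>p\<in>{..<n} \<times> {..<n}. if \<omega> p = 0 then K p else 0)"
    by (rule tendsto_Lim[OF trivial_limit_at_top_linorder lim])
  also have "\<dots> = (\<Sum>a<n. \<Sum>b<n. if \<omega> (a,b) = 0 then K (a,b) else 0)"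
    by (subst sum.cartesian_product, rule sum.cong, auto)
  also have "\<dots> = cj V (mat n n (\<lambda>(a,b). if \<mu> a = \<mu> b then N $$ (a,b) else 0)) $$ (i,j)"
    using V ij by (subst cj_index[of _ n], auto simp: K_def \<omega>_def intro!: sum.cong)
  finally show "dephase ?H R $$ (i,j) = cj V (mat n n (\<lambda>(a,b). if \<mu> a = \<mu> b then (mat_adjoint V * R * V) $$ (a,b) else 0)) $$ (i,j)"
    unfolding N_def .
qed (insert assms unitaryD[OF assms(1)], auto simp: dephase_def carrier_matD)

section \<open>Partial trace\<close>

lemma kronI_mult_index: assumes A: "A \<in> carrier_mat dX dX" and M: "M \<in> carrier_mat (dX*dB) c"
  and i: "i < dX" and k: "k < dB" and q: "q < c"
  shows "(kron A (1\<^sub>m dB) * M) $$ (i*dB+k, q) = (\<Sum>x<dX. A $$ (i,x) * M $$ (x*dB+k, q))"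
proof -
  have "(kron A (1\<^sub>m dB) * M) $$ (i*dB+k, q) = (\<Sum>p<dX*dB. kron A (1\<^sub>m dB) $$ (i*dB+k, p) * M $$ (p,q))"
    using A M i k q idx_lt[OF i k] by (simp add: scalar_prod_def atLeast0LessThan)
  also have "\<dots> = (\<Sum>x<dX. \<Sum>y<dB. kron A (1\<^sub>m dB) $$ (i*dB+k, x*dB+y) * M $$ (x*dB+y,q))"
    by (rule sum_split)
  also have "\<dots> = (\<Sum>x<dX. \<Sum>y<dB. (if y = k then A $$ (i,x) * M $$ (x*dB+y,q) else 0))"
    using A i k by (intro sum.cong refl, subst kron_index2[where A = A and B = "1\<^sub>m dB", simplified], auto)
  also have "\<dots> = (\<Sum>x<dX. A $$ (i,x) * M $$ (x*dB+k, q))" using k by (simp add: sum.delta')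
  finally show ?thesis .
qed

lemma mult_kronI_index: assumes A: "A \<in> carrier_mat dX dX" and M: "M \<in> carrier_mat r (dX*dB)"
  and j: "j < dX" and k: "k < dB" and p: "p < r"
  shows "(M * kron A (1\<^sub>m dB)) $$ (p, j*dB+k) = (\<Sum>x<dX. M $$ (p, x*dB+k) * A $$ (x,j))"
proof -
  have "(M * kron A (1\<^sub>m dB)) $$ (p, j*dB+k) = (\<Sum>q<dX*dB. M $$ (p,q) * kron A (1\<^sub>m dB) $$ (q, j*dB+k))"
    using A M j k p idx_lt[OF j k] by (simp add: scalar_prod_def atLeast0LessThan)
  also have "\<dots> = (\<Sum>x<dX. \<Sum>y<dB. M $$ (p, x*dB+y) * kron A (1\<^sub>m dB) $$ (x*dB+y, j*dB+k))"
    by (rule sum_split)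
  also have "\<dots> = (\<Sum>x<dX. \<Sum>y<dB. (if y = k then M $$ (p, x*dB+y) * A $$ (x,j) else 0))"
    using A j k by (intro sum.cong refl, subst kron_index2[where A = A and B = "1\<^sub>m dB", simplified], auto)
  also have "\<dots> = (\<Sum>x<dX. M $$ (p, x*dB+k) * A $$ (x,j))" using k by (simp add: sum.delta')
  finally show ?thesis .
qed

lemma Ikron_mult_index: assumes B: "B \<in> carrier_mat dB dB" and M: "M \<in> carrier_mat (dX*dB) c"
  and i: "i < dX" and k: "k < dB" and q: "q < c"
  shows "(kron (1\<^sub>m dX) B * M) $$ (i*dB+k, q) = (\<Sum>y<dB. B $$ (k,y) * M $$ (i*dB+y, q))"
proof -
  have "(kron (1\<^sub>m dX) B * M) $$ (i*dB+k, q) = (\<Sum>p<dX*dB. kron (1\<^sub>m dX) B $$ (i*dB+k, p) * M $$ (p,q))"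
    using B M i k q idx_lt[OF i k] by (simp add: scalar_prod_def atLeast0LessThan)
  also have "\<dots> = (\<Sum>x<dX. \<Sum>y<dB. kron (1\<^sub>m dX) B $$ (i*dB+k, x*dB+y) * M $$ (x*dB+y,q))"
    by (rule sum_split)
  also have "\<dots> = (\<Sum>x<dX. if x = i then (\<Sum>y<dB. B $$ (k,y) * M $$ (x*dB+y,q)) else 0)"
  proof (intro sum.cong refl)
    fix x assume x: "x \<in> {..<dX}"
    have "(\<Sum>y<dB. kron (1\<^sub>m dX) B $$ (i*dB+k, x*dB+y) * M $$ (x*dB+y,q)) =
       (\<Sum>y<dB. (if x = i then B $$ (k,y) * M $$ (x*dB+y,q) else 0))"
      using B i k x by (intro sum.cong refl, subst kron_index2c[OF one_carrier_mat B], auto)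
    thus "(\<Sum>y<dB. kron (1\<^sub>m dX) B $$ (i*dB+k, x*dB+y) * M $$ (x*dB+y,q)) =
       (if x = i then (\<Sum>y<dB. B $$ (k,y) * M $$ (x*dB+y,q)) else 0)" by auto
  qed
  also have "\<dots> = (\<Sum>y<dB. B $$ (k,y) * M $$ (i*dB+y, q))" using i by (simp add: sum.delta')
  finally show ?thesis .
qed

lemma mult_Ikron_index: assumes B: "B \<in> carrier_mat dB dB" and M: "M \<in> carrier_mat r (dX*dB)"
  and j: "j < dX" and k: "k < dB" and p: "p < r"
  shows "(M * kron (1\<^sub>m dX) B) $$ (p, j*dB+k) = (\<Sum>y<dB. M $$ (p, j*dB+y) * B $$ (y,k))"
proof -
  have "(M * kron (1\<^sub>m dX) B) $$ (p, j*dB+k) = (\<Sum>q<dX*dB. M $$ (p,q) * kron (1\<^sub>m dX) B $$ (q, j*dB+k))"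
    using B M j k p idx_lt[OF j k] by (simp add: scalar_prod_def atLeast0LessThan)
  also have "\<dots> = (\<Sum>x<dX. \<Sum>y<dB. M $$ (p, x*dB+y) * kron (1\<^sub>m dX) B $$ (x*dB+y, j*dB+k))"
    by (rule sum_split)
  also have "\<dots> = (\<Sum>x<dX. if x = j then (\<Sum>y<dB. M $$ (p, x*dB+y) * B $$ (y,k)) else 0)"
  proof (intro sum.cong refl)
    fix x assume x: "x \<in> {..<dX}"
    have "(\<Sum>y<dB. M $$ (p, x*dB+y) * kron (1\<^sub>m dX) B $$ (x*dB+y, j*dB+k)) =
       (\<Sum>y<dB. (if x = j then M $$ (p, x*dB+y) * B $$ (y,k) else 0))"
      using B j k x by (intro sum.cong refl, subst kron_index2c[OF one_carrier_mat B], auto)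
    thus "(\<Sum>y<dB. M $$ (p, x*dB+y) * kron (1\<^sub>m dX) B $$ (x*dB+y, j*dB+k)) =
       (if x = j then (\<Sum>y<dB. M $$ (p, x*dB+y) * B $$ (y,k)) else 0)" by auto
  qed
  also have "\<dots> = (\<Sum>y<dB. M $$ (p, j*dB+y) * B $$ (y,k))" using j by (simp add: sum.delta')
  finally show ?thesis .
qed

lemma pt_dim[simp]: "dim_row (ptrace2 dB M) = dim_row M div dB" "dim_col (ptrace2 dB M) = dim_col M div dB"
  unfolding ptrace2_def by auto

lemma pt_carrier[simp]: "0 < dB \<Longrightarrow> M \<in> carrier_mat (dX*dB) (dX*dB) \<Longrightarrow> ptrace2 dB M \<in> carrier_mat dX dX"
  unfolding ptrace2_def by auto

lemma pt_index: "0 < dB \<Longrightarrow> M \<in> carrier_mat (dX*dB) (dX*dB) \<Longrightarrow> i < dX \<Longrightarrow> j < dX \<Longrightarrow>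
   ptrace2 dB M $$ (i,j) = (\<Sum>k<dB. M $$ (i*dB+k, j*dB+k))"
  unfolding ptrace2_def by auto

lemma pt_left: assumes dB: "0 < dB" and A: "A \<in> carrier_mat dX dX" and M: "M \<in> carrier_mat (dX*dB) (dX*dB)"
  shows "ptrace2 dB (kron A (1\<^sub>m dB) * M) = A * ptrace2 dB M"
proof (rule eq_matI)
  have KM: "kron A (1\<^sub>m dB) * M \<in> carrier_mat (dX*dB) (dX*dB)" using A M by auto
  fix i j assume "i < dim_row (A * ptrace2 dB M)" "j < dim_col (A * ptrace2 dB M)"
  hence ij: "i < dX" "j < dX" using A M dB by (auto simp: ptrace2_def)
  have "ptrace2 dB (kron A (1\<^sub>m dB) * M) $$ (i,j) = (\<Sum>k<dB. \<Sum>x<dX. A $$ (i,x) * M $$ (x*dB+k, j*dB+k))"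
    using dB KM ij by (simp add: pt_index kronI_mult_index[OF A M] idx_lt)
  also have "\<dots> = (\<Sum>x<dX. A $$ (i,x) * (\<Sum>k<dB. M $$ (x*dB+k, j*dB+k)))"
    by (subst sum.swap, simp add: sum_distrib_left)
  also have "\<dots> = (A * ptrace2 dB M) $$ (i,j)"
    using dB A M ij by (simp add: scalar_prod_def atLeast0LessThan pt_index)
  finally show "ptrace2 dB (kron A (1\<^sub>m dB) * M) $$ (i,j) = (A * ptrace2 dB M) $$ (i,j)" .
qed (insert dB A M, auto simp: ptrace2_def)

lemma pt_right: assumes dB: "0 < dB" and A: "A \<in> carrier_mat dX dX" and M: "M \<in> carrier_mat (dX*dB) (dX*dB)"
  shows "ptrace2 dB (M * kron A (1\<^sub>m dB)) = ptrace2 dB M * A"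
proof (rule eq_matI)
  have KM: "M * kron A (1\<^sub>m dB) \<in> carrier_mat (dX*dB) (dX*dB)" using A M by auto
  fix i j assume "i < dim_row (ptrace2 dB M * A)" "j < dim_col (ptrace2 dB M * A)"
  hence ij: "i < dX" "j < dX" using A M dB by (auto simp: ptrace2_def)
  have "ptrace2 dB (M * kron A (1\<^sub>m dB)) $$ (i,j) = (\<Sum>k<dB. \<Sum>x<dX. M $$ (i*dB+k, x*dB+k) * A $$ (x,j))"
    using dB KM ij by (simp add: pt_index mult_kronI_index[OF A M] idx_lt)
  also have "\<dots> = (\<Sum>x<dX. (\<Sum>k<dB. M $$ (i*dB+k, x*dB+k)) * A $$ (x,j))"
    by (subst sum.swap, simp add: sum_distrib_right)
  also have "\<dots> = (ptrace2 dB M * A) $$ (i,j)"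
    using dB A M ij by (simp add: scalar_prod_def atLeast0LessThan pt_index)
  finally show "ptrace2 dB (M * kron A (1\<^sub>m dB)) $$ (i,j) = (ptrace2 dB M * A) $$ (i,j)" .
qed (insert dB A M, auto simp: ptrace2_def)

lemma pt_B: assumes dB: "0 < dB" and B: "B \<in> carrier_mat dB dB" and M: "M \<in> carrier_mat (dX*dB) (dX*dB)"
  shows "ptrace2 dB (kron (1\<^sub>m dX) B * M) = ptrace2 dB (M * kron (1\<^sub>m dX) B)"
proof (rule eq_matI)
  have KM: "kron (1\<^sub>m dX) B * M \<in> carrier_mat (dX*dB) (dX*dB)" using B M by auto
  have MK: "M * kron (1\<^sub>m dX) B \<in> carrier_mat (dX*dB) (dX*dB)" using B M by auto
  fix i j assume "i < dim_row (ptrace2 dB (M * kron (1\<^sub>m dX) B))" "j < dim_col (ptrace2 dB (M * kron (1\<^sub>m dX) B))"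
  hence ij: "i < dX" "j < dX" using B M dB by (auto simp: ptrace2_def)
  have "ptrace2 dB (kron (1\<^sub>m dX) B * M) $$ (i,j) = (\<Sum>k<dB. \<Sum>y<dB. B $$ (k,y) * M $$ (i*dB+y, j*dB+k))"
    using dB KM ij by (simp add: pt_index Ikron_mult_index[OF B M] idx_lt)
  also have "\<dots> = (\<Sum>y<dB. \<Sum>k<dB. M $$ (i*dB+y, j*dB+k) * B $$ (k,y))"
    by (subst sum.swap, simp add: mult.commute)
  also have "\<dots> = ptrace2 dB (M * kron (1\<^sub>m dX) B) $$ (i,j)"
    using dB MK ij by (simp add: pt_index mult_Ikron_index[OF B M] idx_lt)
  finally show "ptrace2 dB (kron (1\<^sub>m dX) B * M) $$ (i,j) = ptrace2 dB (M * kron (1\<^sub>m dX) B) $$ (i,j)" .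
qed (insert dB B M, auto simp: ptrace2_def)

lemma pt_minus: assumes dB: "0 < dB" and M: "M \<in> carrier_mat (dX*dB) (dX*dB)" and M': "M' \<in> carrier_mat (dX*dB) (dX*dB)"
  shows "ptrace2 dB (M - M') = ptrace2 dB M - ptrace2 dB M'"
  using assms by (intro eq_matI, auto simp: ptrace2_def sum_subtractf idx_lt)

lemma pt_add: assumes dB: "0 < dB" and M: "M \<in> carrier_mat (dX*dB) (dX*dB)" and M': "M' \<in> carrier_mat (dX*dB) (dX*dB)"
  shows "ptrace2 dB (M + M') = ptrace2 dB M + ptrace2 dB M'"
  using assms by (intro eq_matI, auto simp: ptrace2_def sum.distrib idx_lt)

lemma pt_smult: assumes dB: "0 < dB" and M: "M \<in> carrier_mat (dX*dB) (dX*dB)"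
  shows "ptrace2 dB (c \<cdot>\<^sub>m M) = c \<cdot>\<^sub>m ptrace2 dB M"
  using assms by (intro eq_matI, auto simp: ptrace2_def sum_distrib_left idx_lt)

section \<open>Modes\<close>

definition is_mode :: "nat \<Rightarrow> complex mat \<Rightarrow> complex \<Rightarrow> complex mat \<Rightarrow> bool" where
  "is_mode n H \<omega> Y \<longleftrightarrow> Y \<in> carrier_mat n n \<and> H * Y - Y * H = \<omega> \<cdot>\<^sub>m Y"

lemma mat_rearr: fixes A B C D :: "complex mat"
  assumes "A \<in> carrier_mat n m" "B \<in> carrier_mat n m" "C \<in> carrier_mat n m" "D \<in> carrier_mat n m"
  shows "(A + B) - (C + D) = (A - C) + (B - D)"
  using assms by (intro eq_matI, auto)

lemma kron_mode: fixes HX HB Y G :: "complex mat"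
  assumes HX: "HX \<in> carrier_mat dX dX" and HB: "HB \<in> carrier_mat dB dB"
    and Y: "is_mode dX HX \<omega> Y" and G: "G \<in> carrier_mat dB dB" and GB: "HB * G = G * HB"
  shows "is_mode (dX*dB) (kron HX (1\<^sub>m dB) + kron (1\<^sub>m dX) HB) \<omega> (kron Y G)"
proof -
  have Yc: "Y \<in> carrier_mat dX dX" and Ym: "HX * Y - Y * HX = \<omega> \<cdot>\<^sub>m Y" using Y unfolding is_mode_def by auto
  have K1: "kron HX (1\<^sub>m dB) \<in> carrier_mat (dX*dB) (dX*dB)" and K2: "kron (1\<^sub>m dX) HB \<in> carrier_mat (dX*dB) (dX*dB)"
    and K3: "kron Y G \<in> carrier_mat (dX*dB) (dX*dB)" using HX HB Yc G by auto
  have a: "kron HX (1\<^sub>m dB) * kron Y G = kron (HX * Y) G" using HX Yc G by (subst kron_mult, auto)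
  have b: "kron (1\<^sub>m dX) HB * kron Y G = kron Y (HB * G)" using HB Yc G by (subst kron_mult, auto)
  have c: "kron Y G * kron HX (1\<^sub>m dB) = kron (Y * HX) G" using HX Yc G by (subst kron_mult, auto)
  have d: "kron Y G * kron (1\<^sub>m dX) HB = kron Y (G * HB)" using HB Yc G by (subst kron_mult, auto)
  have "(kron HX (1\<^sub>m dB) + kron (1\<^sub>m dX) HB) * kron Y G - kron Y G * (kron HX (1\<^sub>m dB) + kron (1\<^sub>m dX) HB)
     = (kron (HX * Y) G + kron Y (HB * G)) - (kron (Y * HX) G + kron Y (G * HB))"
    using K1 K2 K3 by (simp add: add_mult_distrib_mat[of _ "dX*dB" "dX*dB"] mult_add_distrib_mat[of _ "dX*dB" "dX*dB"] a b c d)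
  also have "\<dots> = (kron (HX * Y) G - kron (Y * HX) G) + (kron Y (HB * G) - kron Y (G * HB))"
    using HX HB Yc G by (intro mat_rearr[of _ "dX*dB" "dX*dB"], auto)
  also have "kron (HX * Y) G - kron (Y * HX) G = kron (HX * Y - Y * HX) G"
    using HX Yc G by (intro kron_minus_left[symmetric], auto)
  also have "kron Y (HB * G) - kron Y (G * HB) = 0\<^sub>m (dX*dB) (dX*dB)" unfolding GB using Yc G HB by simp
  also have "kron (HX * Y - Y * HX) G + 0\<^sub>m (dX*dB) (dX*dB) = \<omega> \<cdot>\<^sub>m kron Y G"
    unfolding Ym using Yc G by (simp add: kron_smult_left)
  finally show ?thesis unfolding is_mode_def using K3 by simp
qed

lemma unitary_comm_adj: assumes U: "unitary_mat n U" and H: "H \<in> carrier_mat n n" and UH: "U * H = H * U"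
  shows "mat_adjoint U * H = H * mat_adjoint U"
proof -
  have Uc: "U \<in> carrier_mat n n" and Ua: "mat_adjoint U \<in> carrier_mat n n" using unitaryD[OF U] by auto
  have "mat_adjoint U * H = mat_adjoint U * (H * (U * mat_adjoint U))" using unitaryD[OF U] H by simp
  also have "\<dots> = mat_adjoint U * ((H * U) * mat_adjoint U)" using Uc Ua H by (subst assoc_mult_mat[of _ n n _ n _ n], auto)
  also have "\<dots> = mat_adjoint U * (U * (H * mat_adjoint U))"
    unfolding UH[symmetric] using Uc Ua H by (subst assoc_mult_mat[of _ n n _ n _ n], auto)
  also have "\<dots> = H * mat_adjoint U" using unitary_cancel1[OF U, of "H * mat_adjoint U" n] H Ua by auto
  finally show ?thesis .
qed

lemma unitary_mode: assumes U: "unitary_mat n U" and H: "H \<in> carrier_mat n n" and UH: "U * H = H * U"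
  and M: "is_mode n H \<omega> M"
  shows "is_mode n H \<omega> (U * M * mat_adjoint U)"
proof -
  have Uc: "U \<in> carrier_mat n n" and Ua: "mat_adjoint U \<in> carrier_mat n n" using unitaryD[OF U] by auto
  have Mc: "M \<in> carrier_mat n n" and Mm: "H * M - M * H = \<omega> \<cdot>\<^sub>m M" using M unfolding is_mode_def by auto
  have UaH: "mat_adjoint U * H = H * mat_adjoint U" by (rule unitary_comm_adj[OF U H UH])
  have 1: "H * cj U M = cj U (H * M)"
  proof -
    have e0: "H * (U * M * mat_adjoint U) = (H * (U * M)) * mat_adjoint U"
      using Uc Ua H Mc by (intro assoc_mult_mat[of _ n n _ n _ n, symmetric], auto)
    have e1: "H * (U * M) = (H * U) * M" using Uc Ua H Mc by (intro assoc_mult_mat[of _ n n _ n _ n, symmetric], auto)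
    have "H * (U * M * mat_adjoint U) = (H * U) * M * mat_adjoint U" unfolding e0 e1 ..
    also have "\<dots> = U * (H * M) * mat_adjoint U" unfolding UH[symmetric] using Uc Ua H Mc by simp
    finally show ?thesis unfolding cj_def .
  qed
  have 2: "cj U M * H = cj U (M * H)"
  proof -
    have "(U * M * mat_adjoint U) * H = U * M * (mat_adjoint U * H)"
      using Uc Ua H Mc by (intro assoc_mult_mat[of _ n n _ n _ n], auto)
    also have "\<dots> = U * M * H * mat_adjoint U"
      unfolding UaH using Uc Ua H Mc by (intro assoc_mult_mat[of _ n n _ n _ n, symmetric], auto)
    also have "U * M * H = U * (M * H)" using Uc Ua H Mc by (intro assoc_mult_mat[of _ n n _ n _ n], auto)
    finally show ?thesis unfolding cj_def .
  qed
  have "H * cj U M - cj U M * H = cj U (H * M - M * H)" unfolding 1 2 using Uc H Mc by (intro cj_minus, auto)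
  also have "\<dots> = \<omega> \<cdot>\<^sub>m cj U M" unfolding Mm using Uc Mc by (simp add: cj_smult)
  finally show ?thesis unfolding is_mode_def cj_def[symmetric] using Uc Mc by simp
qed

lemma pt_mode: assumes dB: "0 < dB" and HX: "HX \<in> carrier_mat dX dX" and HB: "HB \<in> carrier_mat dB dB"
  and M: "is_mode (dX*dB) (kron HX (1\<^sub>m dB) + kron (1\<^sub>m dX) HB) \<omega> M"
  shows "is_mode dX HX \<omega> (ptrace2 dB M)"
proof -
  let ?A = "kron HX (1\<^sub>m dB)" and ?B = "kron (1\<^sub>m dX) HB"
  have Mc: "M \<in> carrier_mat (dX*dB) (dX*dB)" and Mm: "(?A + ?B) * M - M * (?A + ?B) = \<omega> \<cdot>\<^sub>m M"
    using M unfolding is_mode_def by auto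
  have A: "?A \<in> carrier_mat (dX*dB) (dX*dB)" and B: "?B \<in> carrier_mat (dX*dB) (dX*dB)" using HX HB by auto
  have "(?A + ?B) * M - M * (?A + ?B) = (?A * M + ?B * M) - (M * ?A + M * ?B)"
    using A B Mc by (simp add: add_mult_distrib_mat[of _ "dX*dB" "dX*dB"] mult_add_distrib_mat[of _ "dX*dB" "dX*dB"])
  also have "\<dots> = (?A * M - M * ?A) + (?B * M - M * ?B)"
    using A B Mc by (intro mat_rearr[of _ "dX*dB" "dX*dB"], auto)
  finally have eq: "(?A * M - M * ?A) + (?B * M - M * ?B) = \<omega> \<cdot>\<^sub>m M" using Mm by simp
  have "ptrace2 dB (\<omega> \<cdot>\<^sub>m M) = ptrace2 dB (?A * M - M * ?A) + ptrace2 dB (?B * M - M * ?B)"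
    unfolding eq[symmetric] using A B Mc dB by (intro pt_add[where dX = dX], auto intro: minus_carrier_mat)
  also have "ptrace2 dB (?B * M - M * ?B) = 0\<^sub>m dX dX"
  proof -
    have "ptrace2 dB (?B * M - M * ?B) = ptrace2 dB (?B * M) - ptrace2 dB (M * ?B)"
      using B Mc dB by (intro pt_minus[where dX = dX], auto)
    also have "\<dots> = 0\<^sub>m dX dX" unfolding pt_B[OF dB HB Mc] using dB B Mc by simp
    finally show ?thesis .
  qed
  also have "ptrace2 dB (?A * M - M * ?A) = HX * ptrace2 dB M - ptrace2 dB M * HX"
  proof -
    have "ptrace2 dB (?A * M - M * ?A) = ptrace2 dB (?A * M) - ptrace2 dB (M * ?A)"
      using A Mc dB by (intro pt_minus[where dX = dX], auto)
    thus ?thesis unfolding pt_left[OF dB HX Mc] pt_right[OF dB HX Mc] .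
  qed
  finally have "HX * ptrace2 dB M - ptrace2 dB M * HX = \<omega> \<cdot>\<^sub>m ptrace2 dB M"
  proof -
    assume a: "ptrace2 dB (\<omega> \<cdot>\<^sub>m M) = HX * ptrace2 dB M - ptrace2 dB M * HX + 0\<^sub>m dX dX"
    have Pc: "HX * ptrace2 dB M - ptrace2 dB M * HX \<in> carrier_mat dX dX"
      using dB Mc HX by (auto intro: minus_carrier_mat)
    show ?thesis using a Pc pt_smult[OF dB Mc, of \<omega>] by simp
  qed
  thus ?thesis unfolding is_mode_def using dB Mc by simp
qed

section \<open>Finite sums of matrices and uniqueness of mode decompositions\<close>

definition msum :: "nat \<Rightarrow> 'a set \<Rightarrow> ('a \<Rightarrow> complex mat) \<Rightarrow> complex mat" where
  "msum n F f = mat n n (\<lambda>(i,j). \<Sum>x\<in>F. f x $$ (i,j))"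

lemma msum_carrier[simp]: "msum n F f \<in> carrier_mat n n" unfolding msum_def by auto

lemma msum_dim[simp]: "dim_row (msum n F f) = n" "dim_col (msum n F f) = n" unfolding msum_def by auto

lemma msum_cong: "(\<And>x. x \<in> F \<Longrightarrow> f x = g x) \<Longrightarrow> msum n F f = msum n F g"
  unfolding msum_def by (intro cong_mat refl, auto intro!: sum.cong)

lemma msum_index: "i < n \<Longrightarrow> j < n \<Longrightarrow> msum n F f $$ (i,j) = (\<Sum>x\<in>F. f x $$ (i,j))"
  unfolding msum_def by auto

lemma msum_ad: assumes H: "H \<in> carrier_mat n n" and f: "\<And>x. x \<in> F \<Longrightarrow> f x \<in> carrier_mat n n"
  shows "H * msum n F f - msum n F f * H = msum n F (\<lambda>x. H * f x - f x * H)"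
proof (rule eq_matI)
  fix i j assume "i < dim_row (msum n F (\<lambda>x. H * f x - f x * H))" "j < dim_col (msum n F (\<lambda>x. H * f x - f x * H))"
  hence ij: "i < n" "j < n" by auto
  have "(H * msum n F f - msum n F f * H) $$ (i,j) = (\<Sum>k<n. H $$ (i,k) * msum n F f $$ (k,j)) - (\<Sum>k<n. msum n F f $$ (i,k) * H $$ (k,j))"
    using H ij by (simp add: scalar_prod_def atLeast0LessThan)
  also have "\<dots> = (\<Sum>x\<in>F. (\<Sum>k<n. H $$ (i,k) * f x $$ (k,j)) - (\<Sum>k<n. f x $$ (i,k) * H $$ (k,j)))"
    using ij by (simp add: msum_index sum_distrib_left sum_distrib_right sum_subtractf sum.swap[of _ F])
  also have "\<dots> = (\<Sum>x\<in>F. (H * f x - f x * H) $$ (i,j))"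
  proof (rule sum.cong[OF refl])
    fix x assume "x \<in> F"
    hence fx: "f x \<in> carrier_mat n n" by (rule f)
    show "(\<Sum>k<n. H $$ (i,k) * f x $$ (k,j)) - (\<Sum>k<n. f x $$ (i,k) * H $$ (k,j)) = (H * f x - f x * H) $$ (i,j)"
      using fx H ij by (simp add: scalar_prod_def atLeast0LessThan)
  qed
  also have "\<dots> = msum n F (\<lambda>x. H * f x - f x * H) $$ (i,j)"
    using ij by (simp add: msum_index)
  finally show "(H * msum n F f - msum n F f * H) $$ (i,j) = msum n F (\<lambda>x. H * f x - f x * H) $$ (i,j)" .
qed (insert H, auto)

lemma msum_zero_iff: "msum n F f = 0\<^sub>m n n \<longleftrightarrow> (\<forall>i<n. \<forall>j<n. (\<Sum>x\<in>F. f x $$ (i,j)) = 0)"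
  unfolding msum_def by (auto simp: mat_eq_iff)

lemma modes_unique: assumes F: "finite F" and H: "H \<in> carrier_mat n n"
  and Z: "\<And>\<omega>. \<omega> \<in> F \<Longrightarrow> is_mode n H \<omega> (Z \<omega>)" and S: "msum n F Z = 0\<^sub>m n n"
  shows "\<forall>\<omega>\<in>F. Z \<omega> = 0\<^sub>m n n"
  using F Z S
proof (induction F arbitrary: Z rule: finite_induct)
  case empty thus ?case by simp
next
  case (insert x F Z)
  have Zc: "\<And>\<omega>. \<omega> \<in> insert x F \<Longrightarrow> Z \<omega> \<in> carrier_mat n n" using insert.prems(1) unfolding is_mode_def by auto
  have Zm: "\<And>\<omega>. \<omega> \<in> insert x F \<Longrightarrow> H * Z \<omega> - Z \<omega> * H = \<omega> \<cdot>\<^sub>m Z \<omega>" using insert.prems(1) unfolding is_mode_def by auto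
  have S0: "\<And>i j. i < n \<Longrightarrow> j < n \<Longrightarrow> (\<Sum>\<omega>\<in>insert x F. Z \<omega> $$ (i,j)) = 0"
    using insert.prems(2) unfolding msum_zero_iff by auto
  have ad0: "H * msum n (insert x F) Z - msum n (insert x F) Z * H = 0\<^sub>m n n"
    unfolding insert.prems(2) using H by simp
  have "msum n (insert x F) (\<lambda>\<omega>. \<omega> \<cdot>\<^sub>m Z \<omega>) = msum n (insert x F) (\<lambda>\<omega>. H * Z \<omega> - Z \<omega> * H)"
    by (rule msum_cong, rule Zm[symmetric])
  also have "\<dots> = H * msum n (insert x F) Z - msum n (insert x F) Z * H" by (rule msum_ad[OF H Zc, symmetric])
  also have "\<dots> = 0\<^sub>m n n" by (rule ad0)
  finally have "msum n (insert x F) (\<lambda>\<omega>. \<omega> \<cdot>\<^sub>m Z \<omega>) = 0\<^sub>m n n" .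
  hence S1': "\<And>i j. i < n \<Longrightarrow> j < n \<Longrightarrow> (\<Sum>\<omega>\<in>insert x F. (\<omega> \<cdot>\<^sub>m Z \<omega>) $$ (i,j)) = 0"
    unfolding msum_zero_iff by auto
  have S1: "(\<Sum>\<omega>\<in>insert x F. \<omega> * Z \<omega> $$ (i,j)) = 0" if ij: "i < n" "j < n" for i j
  proof -
    have "(\<Sum>\<omega>\<in>insert x F. \<omega> * Z \<omega> $$ (i,j)) = (\<Sum>\<omega>\<in>insert x F. (\<omega> \<cdot>\<^sub>m Z \<omega>) $$ (i,j))"
    proof (rule sum.cong[OF refl])
      fix \<omega> assume "\<omega> \<in> insert x F"
      from Zc[OF this] ij show "\<omega> * Z \<omega> $$ (i,j) = (\<omega> \<cdot>\<^sub>m Z \<omega>) $$ (i,j)" by simp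
    qed
    thus ?thesis using S1'[OF ij] by simp
  qed
  define Z' where "Z' = (\<lambda>\<omega>. (\<omega> - x) \<cdot>\<^sub>m Z \<omega>)"
  have Z'm: "is_mode n H \<omega> (Z' \<omega>)" if "\<omega> \<in> F" for \<omega>
  proof -
    have "H * Z' \<omega> - Z' \<omega> * H = (\<omega> - x) \<cdot>\<^sub>m (H * Z \<omega> - Z \<omega> * H)"
      unfolding Z'_def using H Zc[of \<omega>] that by (intro eq_matI, auto simp: algebra_simps scalar_prod_def sum_distrib_left)
    also have "\<dots> = \<omega> \<cdot>\<^sub>m Z' \<omega>" unfolding Zm[of \<omega>, OF insertI2[OF that]] Z'_def by (intro eq_matI, auto)
    finally show ?thesis unfolding is_mode_def Z'_def using Zc[of \<omega>] that by auto
  qed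
  have "msum n F Z' = 0\<^sub>m n n"
    unfolding msum_zero_iff
  proof (intro allI impI)
    fix i j assume ij: "i < n" "j < n"
    have "(\<Sum>\<omega>\<in>F. Z' \<omega> $$ (i,j)) = (\<Sum>\<omega>\<in>F. \<omega> * Z \<omega> $$ (i,j) - x * Z \<omega> $$ (i,j))"
    proof (rule sum.cong[OF refl])
      fix \<omega> assume "\<omega> \<in> F"
      hence "Z \<omega> \<in> carrier_mat n n" using Zc by auto
      thus "Z' \<omega> $$ (i,j) = \<omega> * Z \<omega> $$ (i,j) - x * Z \<omega> $$ (i,j)"
        unfolding Z'_def using ij by (simp add: algebra_simps)
    qed
    also have "\<dots> = (\<Sum>\<omega>\<in>F. \<omega> * Z \<omega> $$ (i,j)) - x * (\<Sum>\<omega>\<in>F. Z \<omega> $$ (i,j))"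
      by (simp add: sum_subtractf sum_distrib_left)
    also have "\<dots> = (- x * Z x $$ (i,j)) - x * (- Z x $$ (i,j))"
      using S0[OF ij] S1[OF ij] insert.hyps by (simp add: sum.insert add_eq_0_iff)
    finally show "(\<Sum>\<omega>\<in>F. Z' \<omega> $$ (i,j)) = 0" by simp
  qed
  hence Z'0: "\<forall>\<omega>\<in>F. Z' \<omega> = 0\<^sub>m n n" using insert.IH Z'm by blast
  have ZF: "\<forall>\<omega>\<in>F. Z \<omega> = 0\<^sub>m n n"
  proof
    fix \<omega> assume w: "\<omega> \<in> F"
    hence wx: "\<omega> - x \<noteq> 0" using insert.hyps by auto
    have "Z \<omega> = (1 / (\<omega> - x)) \<cdot>\<^sub>m Z' \<omega>" unfolding Z'_def using wx Zc[of \<omega>] w by (intro eq_matI, auto)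
    thus "Z \<omega> = 0\<^sub>m n n" using Z'0 w by auto
  qed
  have "Z x = 0\<^sub>m n n"
  proof (rule eq_matI)
    fix i j assume "i < dim_row (0\<^sub>m n n :: complex mat)" "j < dim_col (0\<^sub>m n n :: complex mat)"
    hence ij: "i < n" "j < n" by auto
    have "(\<Sum>\<omega>\<in>F. Z \<omega> $$ (i,j)) = 0" using ZF ij by simp
    thus "Z x $$ (i,j) = 0\<^sub>m n n $$ (i,j)" using S0[OF ij] insert.hyps ij by simp
  qed (insert Zc[of x], auto)
  with ZF show ?case by auto
qed

section \<open>Mode decomposition of a system state\<close>

definition Xm :: "nat \<Rightarrow> (nat \<Rightarrow> real) \<Rightarrow> complex mat \<Rightarrow> complex \<Rightarrow> complex mat" where
  "Xm n \<mu> N \<omega> = mat n n (\<lambda>(a,b). if complex_of_real (\<mu> a - \<mu> b) = \<omega> then N $$ (a,b) else 0)"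

definition Om :: "nat \<Rightarrow> (nat \<Rightarrow> real) \<Rightarrow> complex set" where
  "Om n \<mu> = (\<lambda>(a,b). complex_of_real (\<mu> a - \<mu> b)) ` ({..<n} \<times> {..<n})"

lemma Xm_carrier[simp]: "Xm n \<mu> N \<omega> \<in> carrier_mat n n" unfolding Xm_def by auto

lemma Om_finite: "finite (Om n \<mu>)" unfolding Om_def by auto

lemma Om_zero: "0 < n \<Longrightarrow> 0 \<in> Om n \<mu>" unfolding Om_def by (auto simp: image_iff intro!: bexI[of _ "(0,0)"])

lemma msum_decomp: assumes V: "V \<in> carrier_mat n n" and N: "N \<in> carrier_mat n n"
  shows "msum n (Om n \<mu>) (\<lambda>\<omega>. cj V (Xm n \<mu> N \<omega>)) = cj V N"
proof (rule eq_matI)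
  fix i j assume "i < dim_row (cj V N)" "j < dim_col (cj V N)"
  hence ij: "i < n" "j < n" using V by (auto simp: carrier_matD)
  have "msum n (Om n \<mu>) (\<lambda>\<omega>. cj V (Xm n \<mu> N \<omega>)) $$ (i,j) =
     (\<Sum>\<omega>\<in>Om n \<mu>. \<Sum>a<n. \<Sum>b<n. (if complex_of_real (\<mu> a - \<mu> b) = \<omega> then V $$ (i,a) * N $$ (a,b) * cnj (V $$ (j,b)) else 0))"
    using ij V by (simp add: msum_index cj_index[OF V Xm_carrier ij], intro sum.cong refl, auto simp: Xm_def)
  also have "\<dots> = (\<Sum>a<n. \<Sum>b<n. \<Sum>\<omega>\<in>Om n \<mu>. (if complex_of_real (\<mu> a - \<mu> b) = \<omega> then V $$ (i,a) * N $$ (a,b) * cnj (V $$ (j,b)) else 0))"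
    by (subst sum.swap, rule sum.cong[OF refl], subst sum.swap, rule refl)
  also have "\<dots> = (\<Sum>a<n. \<Sum>b<n. V $$ (i,a) * N $$ (a,b) * cnj (V $$ (j,b)))"
  proof (intro sum.cong refl)
    fix a b assume "a \<in> {..<n}" "b \<in> {..<n}"
    hence "complex_of_real (\<mu> a - \<mu> b) \<in> Om n \<mu>" unfolding Om_def by auto
    thus "(\<Sum>\<omega>\<in>Om n \<mu>. (if complex_of_real (\<mu> a - \<mu> b) = \<omega> then V $$ (i,a) * N $$ (a,b) * cnj (V $$ (j,b)) else 0)) =
       V $$ (i,a) * N $$ (a,b) * cnj (V $$ (j,b))" using Om_finite by (simp add: sum.delta)
  qed
  also have "\<dots> = cj V N $$ (i,j)" by (rule cj_index[OF V N ij, symmetric])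
  finally show "msum n (Om n \<mu>) (\<lambda>\<omega>. cj V (Xm n \<mu> N \<omega>)) $$ (i,j) = cj V N $$ (i,j)" .
qed (insert V, auto simp: carrier_matD)

lemma Xm_mode: assumes U: "unitary_mat n V"
  shows "is_mode n (udm n V (\<lambda>a. complex_of_real (\<mu> a))) \<omega> (cj V (Xm n \<mu> N \<omega>))"
proof -
  have V: "V \<in> carrier_mat n n" using unitaryD[OF U] by auto
  let ?D = "mat_diag n (\<lambda>a. complex_of_real (\<mu> a))" and ?X = "Xm n \<mu> N \<omega>"
  have "udm n V (\<lambda>a. complex_of_real (\<mu> a)) * cj V ?X - cj V ?X * udm n V (\<lambda>a. complex_of_real (\<mu> a)) =
     cj V (?D * ?X) - cj V (?X * ?D)" unfolding udm_cj using V by (simp add: cj_mult[OF U])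
  also have "\<dots> = cj V (?D * ?X - ?X * ?D)"
    using V mult_carrier_mat[OF mat_diag_dim Xm_carrier] mult_carrier_mat[OF Xm_carrier mat_diag_dim] by (intro cj_minus, auto)
  also have "?D * ?X - ?X * ?D = \<omega> \<cdot>\<^sub>m ?X"
    by (subst mat_diag_mult_left[of _ n n], simp, subst mat_diag_mult_right[of _ n], simp,
        intro eq_matI, auto simp: Xm_def algebra_simps)
  also have "cj V (\<omega> \<cdot>\<^sub>m ?X) = \<omega> \<cdot>\<^sub>m cj V ?X" using V by (intro cj_smult[symmetric], auto)
  finally show ?thesis unfolding is_mode_def using V by auto
qed

lemma dephase_Xm: assumes U: "unitary_mat n V" and R: "R \<in> carrier_mat n n"
  shows "dephase (udm n V (\<lambda>a. complex_of_real (\<mu> a))) R = cj V (Xm n \<mu> (mat_adjoint V * R * V) 0)"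
  unfolding dephase_udm[OF U R] Xm_def by (intro arg_cong[where f = "cj V"] cong_mat refl, auto)

definition qf :: "complex mat \<Rightarrow> (nat \<Rightarrow> complex) \<Rightarrow> nat \<Rightarrow> complex" where
  "qf A y n = (\<Sum>a<n. \<Sum>b<n. A $$ (a,b) * y b * cnj (y a))"

lemma qf_vec: assumes A: "A \<in> carrier_mat n n" and w: "w \<in> carrier_vec n"
  shows "(A *\<^sub>v w) \<bullet>c w = qf A (\<lambda>i. w $ i) n"
  unfolding qf_def using A w by (simp add: scalar_prod_def atLeast0LessThan sum_distrib_right)

lemma density_qf: assumes "density_mat n R" shows "0 \<le> Re (qf R y n)"
proof -
  have R: "R \<in> carrier_mat n n" using assms unfolding density_mat_def hermitian_mat_def by auto
  have "0 \<le> Re ((R *\<^sub>v vec n y) \<bullet>c vec n y)" using assms unfolding density_mat_def by auto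
  also have "(R *\<^sub>v vec n y) \<bullet>c vec n y = qf R y n" using qf_vec[OF R, of "vec n y"] unfolding qf_def by simp
  finally show ?thesis .
qed

lemma density_qfI: assumes "hermitian_mat n R" "\<And>y. 0 \<le> Re (qf R y n)" "ctrace R = 1"
  shows "density_mat n R"
  unfolding density_mat_def using assms qf_vec[of R n] unfolding hermitian_mat_def by auto

lemma qf_cj: assumes V: "V \<in> carrier_mat n n" and X: "X \<in> carrier_mat n n"
  shows "qf (cj V X) w n = qf X (\<lambda>b. \<Sum>q<n. cnj (V $$ (q,b)) * w q) n"
proof -
  have "qf (cj V X) w n = (\<Sum>p<n. \<Sum>q<n. \<Sum>a<n. \<Sum>b<n. X $$ (a,b) * (cnj (V $$ (q,b)) * w q) * cnj (cnj (V $$ (p,a)) * w p))"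
    unfolding qf_def using V X by (intro sum.cong refl, simp add: cj_index sum_distrib_right sum_distrib_left algebra_simps)
  also have "\<dots> = (\<Sum>p<n. \<Sum>a<n. \<Sum>q<n. \<Sum>b<n. X $$ (a,b) * (cnj (V $$ (q,b)) * w q) * cnj (cnj (V $$ (p,a)) * w p))"
    by (rule sum.cong[OF refl], rule sum.swap)
  also have "\<dots> = (\<Sum>a<n. \<Sum>p<n. \<Sum>q<n. \<Sum>b<n. X $$ (a,b) * (cnj (V $$ (q,b)) * w q) * cnj (cnj (V $$ (p,a)) * w p))"
    by (rule sum.swap)
  also have "\<dots> = (\<Sum>a<n. \<Sum>p<n. \<Sum>b<n. \<Sum>q<n. X $$ (a,b) * (cnj (V $$ (q,b)) * w q) * cnj (cnj (V $$ (p,a)) * w p))"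
    by (rule sum.cong[OF refl], rule sum.cong[OF refl], rule sum.swap)
  also have "\<dots> = (\<Sum>a<n. \<Sum>b<n. \<Sum>p<n. \<Sum>q<n. X $$ (a,b) * (cnj (V $$ (q,b)) * w q) * cnj (cnj (V $$ (p,a)) * w p))"
    by (rule sum.cong[OF refl], rule sum.swap)
  also have "\<dots> = (\<Sum>a<n. \<Sum>b<n. \<Sum>q<n. \<Sum>p<n. X $$ (a,b) * (cnj (V $$ (q,b)) * w q) * cnj (cnj (V $$ (p,a)) * w p))"
    by (rule sum.cong[OF refl], rule sum.cong[OF refl], rule sum.swap)
  also have "\<dots> = qf X (\<lambda>b. \<Sum>q<n. cnj (V $$ (q,b)) * w q) n"
    unfolding qf_def by (intro sum.cong refl, simp add: sum_distrib_left sum_distrib_right sum_conjugate algebra_simps)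
  finally show ?thesis .
qed

lemma unitary_adj: "unitary_mat n V \<Longrightarrow> unitary_mat n (mat_adjoint V)"
  unfolding unitary_mat_def by auto

lemma trace_cj: assumes U: "unitary_mat n V" and X: "X \<in> carrier_mat n n"
  shows "ctrace (cj V X) = ctrace X"
proof -
  have V: "V \<in> carrier_mat n n" using unitaryD[OF U] by auto
  have "ctrace (cj V X) = (\<Sum>i<n. \<Sum>a<n. \<Sum>b<n. V $$ (i,a) * X $$ (a,b) * cnj (V $$ (i,b)))"
    unfolding ctrace_def using V X by (simp add: cj_index)
  also have "\<dots> = (\<Sum>a<n. \<Sum>b<n. X $$ (a,b) * (\<Sum>i<n. cnj (V $$ (i,b)) * V $$ (i,a)))"
    by (subst sum.swap, rule sum.cong[OF refl], subst sum.swap, simp add: sum_distrib_left algebra_simps)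
  also have "\<dots> = (\<Sum>a<n. \<Sum>b<n. X $$ (a,b) * (if b = a then 1 else 0))"
    by (intro sum.cong refl, simp add: unitary_sum1[OF U])
  also have "\<dots> = (\<Sum>a<n. X $$ (a,a))"
  proof (rule sum.cong[OF refl])
    fix a assume a: "a \<in> {..<n}"
    have "(\<lambda>b. X $$ (a,b) * (if b = a then 1 else 0)) = (\<lambda>b. if b = a then X $$ (a,b) else 0)" by auto
    show "(\<Sum>b<n. X $$ (a,b) * (if b = a then 1 else 0)) = X $$ (a,a)" using a by (simp add: sum_delta_mult2)
  qed
  also have "\<dots> = ctrace X" unfolding ctrace_def using X by simp
  finally show ?thesis .
qed

lemma cj_adj: "cj (mat_adjoint V) R = mat_adjoint V * R * V" unfolding cj_def by simp

lemma sum_ind_img: fixes n :: nat and \<mu> :: "nat \<Rightarrow> real" assumes a: "a < n"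
  shows "(\<Sum>E\<in>\<mu> ` {..<n}. if \<mu> a = E \<and> \<mu> b = E then t else 0) = (if \<mu> a = \<mu> b then t else (0::complex))"
proof (cases "\<mu> a = \<mu> b")
  case True
  have "(\<Sum>E\<in>\<mu> ` {..<n}. if \<mu> a = E \<and> \<mu> b = E then t else 0) = (\<Sum>E\<in>\<mu> ` {..<n}. if E = \<mu> a then t else 0)"
    using True by (intro sum.cong refl, auto)
  also have "\<dots> = t"
  proof -
    have "\<mu> a \<in> \<mu> ` {..<n}" using a by auto
    thus ?thesis by (subst sum.delta, auto)
  qed
  finally show ?thesis using True by simp
next
  case False
  thus ?thesis by (intro trans[OF sum.neutral], auto)
qed

lemma density_dephased: assumes U: "unitary_mat n V" and R: "density_mat n R"
  shows "density_mat n (cj V (Xm n \<mu> (mat_adjoint V * R * V) 0))"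
proof -
  have V: "V \<in> carrier_mat n n" and Va: "mat_adjoint V \<in> carrier_mat n n" using unitaryD[OF U] by auto
  have Rc: "R \<in> carrier_mat n n" and Rh: "mat_adjoint R = R" and Rt: "ctrace R = 1"
    using R unfolding density_mat_def hermitian_mat_def by auto
  define N where "N = mat_adjoint V * R * V"
  have N: "N \<in> carrier_mat n n" unfolding N_def using V Rc by auto
  have Nh: "mat_adjoint N = N"
  proof -
    have "mat_adjoint (mat_adjoint V * R * V) = mat_adjoint V * mat_adjoint (mat_adjoint V * R)"
      using V Va Rc by (intro adj_mult[of _ n n _ n], auto)
    also have "mat_adjoint (mat_adjoint V * R) = mat_adjoint R * mat_adjoint (mat_adjoint V)"
      using V Va Rc by (intro adj_mult[of _ n n _ n], auto)
    also have "mat_adjoint V * (mat_adjoint R * mat_adjoint (mat_adjoint V)) = mat_adjoint V * R * V"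
      unfolding Rh adj_adj using V Va Rc by (intro assoc_mult_mat[of _ n n _ n _ n, symmetric], auto)
    finally show ?thesis unfolding N_def .
  qed
  define X where "X = Xm n \<mu> N 0"
  have X: "X \<in> carrier_mat n n" unfolding X_def by simp
  have Xe: "X $$ (a,b) = (if \<mu> a = \<mu> b then N $$ (a,b) else 0)" if "a < n" "b < n" for a b
    using that unfolding X_def Xm_def by auto
  have Nhe: "cnj (N $$ (b,a)) = N $$ (a,b)" if "a < n" "b < n" for a b
    using Nh that N by (metis adj_index carrier_matD)
  have herm: "hermitian_mat n (cj V X)"
  proof (rule hermitianI)
    show "cj V X \<in> carrier_mat n n" using V X by simp
    fix i j assume ij: "i < n" "j < n"
    have "cnj (cj V X $$ (j,i)) = (\<Sum>a<n. \<Sum>b<n. cnj (V $$ (j,a)) * cnj (X $$ (a,b)) * V $$ (i,b))"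
      using V X ij by (simp add: cj_index sum_conjugate)
    also have "\<dots> = (\<Sum>b<n. \<Sum>a<n. V $$ (i,b) * X $$ (b,a) * cnj (V $$ (j,a)))"
      by (subst sum.swap, intro sum.cong refl, auto simp: Xe Nhe)
    also have "\<dots> = cj V X $$ (i,j)" using V X ij by (simp add: cj_index)
    finally show "cnj (cj V X $$ (j,i)) = cj V X $$ (i,j)" .
  qed
  have pos: "0 \<le> Re (qf (cj V X) y n)" for y
  proof -
    define z where "z = (\<lambda>b. \<Sum>q<n. cnj (V $$ (q,b)) * y q)"
    have "qf (cj V X) y n = qf X z n" unfolding z_def by (rule qf_cj[OF V X])
    also have "\<dots> = (\<Sum>E\<in>\<mu> ` {..<n}. qf N (\<lambda>b. if \<mu> b = E then z b else 0) n)"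
    proof -
      have "qf X z n = (\<Sum>a<n. \<Sum>b<n. \<Sum>E\<in>\<mu> ` {..<n}. (if \<mu> a = E \<and> \<mu> b = E then N $$ (a,b) * z b * cnj (z a) else 0))"
        unfolding qf_def by (intro sum.cong refl, simp add: Xe sum_ind_img)
      also have "\<dots> = (\<Sum>E\<in>\<mu> ` {..<n}. \<Sum>a<n. \<Sum>b<n. (if \<mu> a = E \<and> \<mu> b = E then N $$ (a,b) * z b * cnj (z a) else 0))"
        by (subst sum.swap, rule sum.cong[OF refl], subst sum.swap, rule refl)
      also have "\<dots> = (\<Sum>E\<in>\<mu> ` {..<n}. qf N (\<lambda>b. if \<mu> b = E then z b else 0) n)"
        unfolding qf_def by (intro sum.cong refl, auto)
      finally show ?thesis .
    qed
    finally have eq: "qf (cj V X) y n = (\<Sum>E\<in>\<mu> ` {..<n}. qf N (\<lambda>b. if \<mu> b = E then z b else 0) n)" .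
    have "0 \<le> Re (qf N w n)" for w
    proof -
      have "qf N w n = qf R (\<lambda>b. \<Sum>q<n. cnj (mat_adjoint V $$ (q,b)) * w q) n"
        unfolding N_def cj_adj[symmetric] by (rule qf_cj[OF Va Rc])
      thus ?thesis using density_qf[OF R] by simp
    qed
    thus ?thesis unfolding eq Re_sum by (intro sum_nonneg) auto
  qed
  have tr: "ctrace (cj V X) = 1"
  proof -
    have "ctrace (cj V X) = ctrace X" by (rule trace_cj[OF U X])
    also have "\<dots> = ctrace N" unfolding ctrace_def using X N by (intro sum.cong refl, auto simp: Xe)
    also have "\<dots> = ctrace R" unfolding N_def cj_adj[symmetric] by (rule trace_cj[OF unitary_adj[OF U] Rc])
    finally show ?thesis using Rt by simp
  qed
  show ?thesis unfolding X_def[symmetric] N_def[symmetric] by (rule density_qfI[OF herm pos tr])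
qed

lemma proj_carrier[simp]: "v \<in> carrier_vec n \<Longrightarrow> proj_vec v \<in> carrier_mat n n"
  unfolding proj_vec_def by auto

lemma proj_dim[simp]: "dim_row (proj_vec v) = dim_vec v" "dim_col (proj_vec v) = dim_vec v"
  unfolding proj_vec_def by auto

lemma proj_index: "v \<in> carrier_vec n \<Longrightarrow> k < n \<Longrightarrow> l < n \<Longrightarrow> proj_vec v $$ (k,l) = v $ k * cnj (v $ l)"
  unfolding proj_vec_def by auto

lemma density_kron_proj: assumes R: "density_mat dS R" and v: "v \<in> carrier_vec dW" and vv: "v \<bullet>c v = 1"
  shows "density_mat (dS*dW) (kron R (proj_vec v))"
proof -
  let ?P = "proj_vec v" and ?K = "kron R (proj_vec v)"
  have Rc: "R \<in> carrier_mat dS dS" and Rt: "ctrace R = 1" and Rh: "hermitian_mat dS R"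
    using R unfolding density_mat_def hermitian_mat_def by auto
  have P: "?P \<in> carrier_mat dW dW" using v by simp
  have K: "?K \<in> carrier_mat (dS*dW) (dS*dW)" using Rc P by simp
  have Ke: "?K $$ (i*dW+k, j*dW+l) = R $$ (i,j) * (v $ k * cnj (v $ l))"
    if "i < dS" "j < dS" "k < dW" "l < dW" for i j k l
    using kron_index2c[OF Rc P that] proj_index[OF v that(3,4)] by simp
  have herm: "hermitian_mat (dS*dW) ?K"
  proof (rule hermitianI[OF K])
    fix p q assume pq: "p < dS*dW" "q < dS*dW"
    from idx_decomp[OF pq(1)] obtain i k where p: "p = i*dW+k" "i < dS" "k < dW" by blast
    from idx_decomp[OF pq(2)] obtain j l where q: "q = j*dW+l" "j < dS" "l < dW" by blast
    show "cnj (?K $$ (q,p)) = ?K $$ (p,q)" unfolding p(1) q(1) Ke[OF p(2) q(2) p(3) q(3)] Ke[OF q(2) p(2) q(3) p(3)]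
      using hermitianD[OF Rh p(2) q(2)] by simp
  qed
  have pos: "0 \<le> Re (qf ?K y (dS*dW))" for y
  proof -
    define z where "z = (\<lambda>j. \<Sum>l<dW. cnj (v $ l) * y (j*dW+l))"
    have "qf ?K y (dS*dW) = (\<Sum>i<dS. \<Sum>k<dW. \<Sum>q<dS*dW. ?K $$ (i*dW+k, q) * y q * cnj (y (i*dW+k)))"
      unfolding qf_def by (rule sum_split)
    also have "\<dots> = (\<Sum>i<dS. \<Sum>k<dW. \<Sum>j<dS. \<Sum>l<dW. R $$ (i,j) * (v $ k * cnj (v $ l)) * y (j*dW+l) * cnj (y (i*dW+k)))"
      by (rule sum.cong[OF refl], rule sum.cong[OF refl], subst sum_split, rule sum.cong[OF refl], rule sum.cong[OF refl], simp add: Ke)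
    also have "\<dots> = (\<Sum>i<dS. \<Sum>j<dS. \<Sum>k<dW. \<Sum>l<dW. R $$ (i,j) * (v $ k * cnj (v $ l)) * y (j*dW+l) * cnj (y (i*dW+k)))"
      by (rule sum.cong[OF refl], rule sum.swap)
    also have "\<dots> = (\<Sum>i<dS. \<Sum>j<dS. \<Sum>l<dW. \<Sum>k<dW. R $$ (i,j) * (v $ k * cnj (v $ l)) * y (j*dW+l) * cnj (y (i*dW+k)))"
      by (rule sum.cong[OF refl], rule sum.cong[OF refl], rule sum.swap)
    also have "\<dots> = qf R z dS"
      unfolding qf_def z_def by (intro sum.cong refl, simp add: sum_distrib_left sum_distrib_right sum_conjugate algebra_simps)
    finally have "qf ?K y (dS*dW) = qf R z dS" .
    thus ?thesis using density_qf[OF R] by simp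
  qed
  have tr: "ctrace ?K = 1"
  proof -
    have "ctrace ?K = (\<Sum>i<dS. \<Sum>k<dW. ?K $$ (i*dW+k, i*dW+k))" unfolding ctrace_def using Rc P v by (simp add: sum_split carrier_matD carrier_vecD)
    also have "\<dots> = (\<Sum>i<dS. R $$ (i,i) * (\<Sum>k<dW. v $ k * cnj (v $ k)))"
      by (intro sum.cong refl, simp add: Ke sum_distrib_left)
    also have "(\<Sum>k<dW. v $ k * cnj (v $ k)) = 1" using vv cscalar_sum[OF v v] by simp
    finally show ?thesis using Rt Rc unfolding ctrace_def by simp
  qed
  show ?thesis by (rule density_qfI[OF herm pos tr])
qed

lemma eigen_proj_comm: assumes H: "hermitian_mat n H" and ev: "eigenvector H v e" and vv: "v \<bullet>c v = 1"
  shows "H * proj_vec v = proj_vec v * H"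
proof -
  have Hc: "H \<in> carrier_mat n n" using H unfolding hermitian_mat_def by auto
  have v: "v \<in> carrier_vec n" and Hv: "H *\<^sub>v v = e \<cdot>\<^sub>v v" using ev Hc unfolding eigenvector_def by auto
  have Hvi: "(\<Sum>m<n. H $$ (k,m) * v $ m) = e * v $ k" if "k < n" for k
  proof -
    have "(H *\<^sub>v v) $ k = e * v $ k" using Hv v that by simp
    thus ?thesis using Hc v that by (simp add: scalar_prod_def atLeast0LessThan)
  qed
  have "e = e * (\<Sum>k<n. v $ k * cnj (v $ k))" using vv cscalar_sum[OF v v] by simp
  also have "\<dots> = (\<Sum>k<n. (\<Sum>m<n. H $$ (k,m) * v $ m) * cnj (v $ k))"
    by (simp add: sum_distrib_left Hvi mult.assoc)
  finally have e1: "e = (\<Sum>k<n. \<Sum>m<n. H $$ (k,m) * v $ m * cnj (v $ k))" by (simp add: sum_distrib_right)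
  have "cnj e = (\<Sum>k<n. \<Sum>m<n. H $$ (m,k) * cnj (v $ m) * v $ k)"
    unfolding e1 by (simp add: sum_conjugate hermitianD[OF H] algebra_simps)
  also have "\<dots> = e" unfolding e1 by (subst sum.swap, simp add: algebra_simps)
  finally have er: "cnj e = e" .
  show ?thesis
  proof (rule eq_matI)
    fix k l assume "k < dim_row (proj_vec v * H)" "l < dim_col (proj_vec v * H)"
    hence kl: "k < n" "l < n" using Hc v by (auto simp: carrier_vecD)
    have "(H * proj_vec v) $$ (k,l) = (\<Sum>m<n. H $$ (k,m) * (v $ m * cnj (v $ l)))"
      using Hc v kl by (simp add: scalar_prod_def atLeast0LessThan proj_index)
    also have "\<dots> = (\<Sum>m<n. H $$ (k,m) * v $ m) * cnj (v $ l)" by (simp add: sum_distrib_right mult.assoc)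
    also have "\<dots> = e * v $ k * cnj (v $ l)" using Hvi[OF kl(1)] by simp
    also have "\<dots> = v $ k * cnj (e * v $ l)" using er by (simp add: algebra_simps)
    also have "e * v $ l = (\<Sum>m<n. H $$ (l,m) * v $ m)" using Hvi[OF kl(2)] by simp
    also have "v $ k * cnj (\<Sum>m<n. H $$ (l,m) * v $ m) = (\<Sum>m<n. (v $ k * cnj (v $ m)) * H $$ (m,l))"
      by (simp add: sum_conjugate sum_distrib_left hermitianD[OF H] kl algebra_simps)
    also have "\<dots> = (proj_vec v * H) $$ (k,l)"
      using Hc v kl by (simp add: scalar_prod_def atLeast0LessThan proj_index)
    finally show "(H * proj_vec v) $$ (k,l) = (proj_vec v * H) $$ (k,l)" .
  qed (insert Hc v, auto)
qed

lemma gibbs_comm: assumes H: "hermitian_mat n H"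
  shows "gibbs \<beta> H \<in> carrier_mat n n \<and> H * gibbs \<beta> H = gibbs \<beta> H * H"
proof -
  obtain V \<mu> where U: "unitary_mat n V" and He: "H = V * mat_diag n (\<lambda>i. complex_of_real (\<mu> i)) * mat_adjoint V"
    using spectral[OF H] by blast
  have V: "V \<in> carrier_mat n n" using unitaryD[OF U] by auto
  have He': "H = udm n V (\<lambda>i. complex_of_real (\<mu> i))" unfolding udm_def by (rule He)
  define E where "E = mexp ((- complex_of_real \<beta>) \<cdot>\<^sub>m H)"
  have Ee: "E = udm n V (\<lambda>a. exp (- complex_of_real \<beta> * complex_of_real (\<mu> a)))"
    unfolding E_def He' udm_smult[OF V] mexp_udm[OF U] ..
  have E: "E \<in> carrier_mat n n" unfolding Ee using V by simp
  have HE: "H * E = E * H" unfolding Ee He' udm_mult[OF U] by (simp add: mult.commute)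
  have g: "gibbs \<beta> H = (1 / ctrace E) \<cdot>\<^sub>m E" unfolding gibbs_def E_def Let_def ..
  have Hc: "H \<in> carrier_mat n n" using H unfolding hermitian_mat_def by auto
  have "H * gibbs \<beta> H = (1 / ctrace E) \<cdot>\<^sub>m (H * E)" unfolding g using Hc E by (rule mult_smult_distrib)
  also have "\<dots> = (1 / ctrace E) \<cdot>\<^sub>m (E * H)" unfolding HE ..
  also have "\<dots> = gibbs \<beta> H * H" unfolding g using E Hc by (rule mult_smult_assoc_mat[symmetric])
  finally show ?thesis unfolding g using E by simp
qed

lemma is_mode_minus: "is_mode n H \<omega> A \<Longrightarrow> is_mode n H \<omega> B \<Longrightarrow> H \<in> carrier_mat n n \<Longrightarrow> is_mode n H \<omega> (A - B)"
  unfolding is_mode_def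
proof (elim conjE, intro conjI)
  assume A: "A \<in> carrier_mat n n" and B: "B \<in> carrier_mat n n" and H: "H \<in> carrier_mat n n"
    and a: "H * A - A * H = \<omega> \<cdot>\<^sub>m A" and b: "H * B - B * H = \<omega> \<cdot>\<^sub>m B"
  show "A - B \<in> carrier_mat n n" using B by (rule minus_carrier_mat)
  have "H * (A - B) - (A - B) * H = (H * A - A * H) - (H * B - B * H)"
    using A B H by (intro eq_matI, auto simp: scalar_prod_def sum_subtractf algebra_simps)
  also have "\<dots> = \<omega> \<cdot>\<^sub>m (A - B)" unfolding a b using A B by (intro eq_matI, auto simp: algebra_simps)
  finally show "H * (A - B) - (A - B) * H = \<omega> \<cdot>\<^sub>m (A - B)" .
qed

lemma kron_msum: assumes f: "\<And>x. x \<in> F \<Longrightarrow> f x \<in> carrier_mat n n" and B: "B \<in> carrier_mat m m"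
  shows "kron (msum n F f) B = msum (n*m) F (\<lambda>x. kron (f x) B)"
proof (rule eq_matI)
  fix p q assume "p < dim_row (msum (n*m) F (\<lambda>x. kron (f x) B))" "q < dim_col (msum (n*m) F (\<lambda>x. kron (f x) B))"
  hence pq: "p < n*m" "q < n*m" by auto
  from idx_decomp[OF pq(1)] obtain i k where p: "p = i*m+k" "i < n" "k < m" by blast
  from idx_decomp[OF pq(2)] obtain j l where q: "q = j*m+l" "j < n" "l < m" by blast
  have "kron (msum n F f) B $$ (p,q) = (\<Sum>x\<in>F. f x $$ (i,j)) * B $$ (k,l)"
    unfolding p(1) q(1) using kron_index2c[OF msum_carrier B p(2) q(2) p(3) q(3)] p q by (simp add: msum_index)
  also have "\<dots> = (\<Sum>x\<in>F. kron (f x) B $$ (p,q))"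
    unfolding sum_distrib_right p(1) q(1) using kron_index2c[OF f B p(2) q(2) p(3) q(3)] by (intro sum.cong refl) auto
  also have "\<dots> = msum (n*m) F (\<lambda>x. kron (f x) B) $$ (p,q)" using pq by (simp add: msum_index)
  finally show "kron (msum n F f) B $$ (p,q) = msum (n*m) F (\<lambda>x. kron (f x) B) $$ (p,q)" .
qed (insert B, auto)

lemma msum_mult_left: assumes A: "A \<in> carrier_mat n n" and f: "\<And>x. x \<in> F \<Longrightarrow> f x \<in> carrier_mat n n"
  shows "A * msum n F f = msum n F (\<lambda>x. A * f x)"
proof (rule eq_matI)
  fix i j assume "i < dim_row (msum n F (\<lambda>x. A * f x))" "j < dim_col (msum n F (\<lambda>x. A * f x))"
  hence ij: "i < n" "j < n" by auto
  have "(A * msum n F f) $$ (i,j) = (\<Sum>k<n. A $$ (i,k) * (\<Sum>x\<in>F. f x $$ (k,j)))"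
    using A ij by (simp add: scalar_prod_def atLeast0LessThan msum_index)
  also have "\<dots> = (\<Sum>x\<in>F. \<Sum>k<n. A $$ (i,k) * f x $$ (k,j))" by (simp add: sum_distrib_left sum.swap[of _ F])
  also have "\<dots> = (\<Sum>x\<in>F. (A * f x) $$ (i,j))"
  proof (rule sum.cong[OF refl])
    fix x assume "x \<in> F" hence "f x \<in> carrier_mat n n" by (rule f)
    thus "(\<Sum>k<n. A $$ (i,k) * f x $$ (k,j)) = (A * f x) $$ (i,j)" using A ij by (simp add: scalar_prod_def atLeast0LessThan)
  qed
  finally show "(A * msum n F f) $$ (i,j) = msum n F (\<lambda>x. A * f x) $$ (i,j)" using ij by (simp add: msum_index)
qed (insert A, auto)

lemma msum_mult_right: assumes A: "A \<in> carrier_mat n n" and f: "\<And>x. x \<in> F \<Longrightarrow> f x \<in> carrier_mat n n"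
  shows "msum n F f * A = msum n F (\<lambda>x. f x * A)"
proof (rule eq_matI)
  fix i j assume "i < dim_row (msum n F (\<lambda>x. f x * A))" "j < dim_col (msum n F (\<lambda>x. f x * A))"
  hence ij: "i < n" "j < n" by auto
  have "(msum n F f * A) $$ (i,j) = (\<Sum>k<n. (\<Sum>x\<in>F. f x $$ (i,k)) * A $$ (k,j))"
    using A ij by (simp add: scalar_prod_def atLeast0LessThan msum_index)
  also have "\<dots> = (\<Sum>x\<in>F. \<Sum>k<n. f x $$ (i,k) * A $$ (k,j))" by (simp add: sum_distrib_right sum.swap[of _ F])
  also have "\<dots> = (\<Sum>x\<in>F. (f x * A) $$ (i,j))"
  proof (rule sum.cong[OF refl])
    fix x assume "x \<in> F" hence "f x \<in> carrier_mat n n" by (rule f)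
    thus "(\<Sum>k<n. f x $$ (i,k) * A $$ (k,j)) = (f x * A) $$ (i,j)" using A ij by (simp add: scalar_prod_def atLeast0LessThan)
  qed
  finally show "(msum n F f * A) $$ (i,j) = msum n F (\<lambda>x. f x * A) $$ (i,j)" using ij by (simp add: msum_index)
qed (insert A, auto)

lemma pt_msum: assumes dB: "0 < dB" and f: "\<And>x. x \<in> F \<Longrightarrow> f x \<in> carrier_mat (dX*dB) (dX*dB)"
  shows "ptrace2 dB (msum (dX*dB) F f) = msum dX F (\<lambda>x. ptrace2 dB (f x))"
proof (rule eq_matI)
  fix i j assume "i < dim_row (msum dX F (\<lambda>x. ptrace2 dB (f x)))" "j < dim_col (msum dX F (\<lambda>x. ptrace2 dB (f x)))"
  hence ij: "i < dX" "j < dX" by auto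
  have "ptrace2 dB (msum (dX*dB) F f) $$ (i,j) = (\<Sum>k<dB. \<Sum>x\<in>F. f x $$ (i*dB+k, j*dB+k))"
    by (subst pt_index[OF dB msum_carrier ij], rule sum.cong[OF refl], auto simp: msum_index idx_lt ij)
  also have "\<dots> = (\<Sum>x\<in>F. \<Sum>k<dB. f x $$ (i*dB+k, j*dB+k))" by (rule sum.swap)
  also have "\<dots> = (\<Sum>x\<in>F. ptrace2 dB (f x) $$ (i,j))"
    by (rule sum.cong[OF refl], rule pt_index[OF dB f ij, symmetric])
  also have "\<dots> = msum dX F (\<lambda>x. ptrace2 dB (f x)) $$ (i,j)" using ij by (simp add: msum_index)
  finally show "ptrace2 dB (msum (dX*dB) F f) $$ (i,j) = msum dX F (\<lambda>x. ptrace2 dB (f x)) $$ (i,j)" .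
qed (insert dB, auto)

theorem mainTheorem12:
  fixes dS dW :: nat and \<beta> :: real and HS HW \<rho>S \<sigma>W :: "complex mat"
    and v0 :: "complex vec" and e0 :: complex
    and T :: "complex mat \<Rightarrow> complex mat"
  assumes "0 < \<beta>" and "0 < dS"
    and "hermitian_mat dS HS" and "hermitian_mat dW HW"
    and "eigenvector HW v0 e0" and "v0 \<bullet>c v0 = 1"
    and "density_mat dS \<rho>S"
    and "density_mat dW \<sigma>W" and "\<sigma>W * HW = HW * \<sigma>W"
    and "thermal_op \<beta> (dS * dW) (kron HS (1\<^sub>m dW) + kron (1\<^sub>m dS) HW) T"
    and "T (kron \<rho>S (proj_vec v0)) = kron (gibbs \<beta> HS) \<sigma>W"
  shows "T (kron (dephase HS \<rho>S) (proj_vec v0)) = kron (gibbs \<beta> HS) \<sigma>W"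
proof -
  note HSh = assms(3) and HWh = assms(4) and ev = assms(5) and vv = assms(6) and R = assms(7)
    and \<sigma> = assms(8) and \<sigma>c = assms(9) and th = assms(10) and hyp = assms(11)
  let ?HX = "kron HS (1\<^sub>m dW) + kron (1\<^sub>m dS) HW"
  let ?P = "proj_vec v0"
  let ?g = "kron (gibbs \<beta> HS) \<sigma>W"
  have HSc: "HS \<in> carrier_mat dS dS" using HSh unfolding hermitian_mat_def by auto
  have HWc: "HW \<in> carrier_mat dW dW" using HWh unfolding hermitian_mat_def by auto
  have Rc: "\<rho>S \<in> carrier_mat dS dS" using R unfolding density_mat_def hermitian_mat_def by auto
  have \<sigma>C: "\<sigma>W \<in> carrier_mat dW dW" using \<sigma> unfolding density_mat_def hermitian_mat_def by auto
  have v0: "v0 \<in> carrier_vec dW" using ev HWc unfolding eigenvector_def by auto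
  have Pc: "?P \<in> carrier_mat dW dW" using v0 by simp
  have PW: "HW * ?P = ?P * HW" by (rule eigen_proj_comm[OF HWh ev vv])
  have HXc: "?HX \<in> carrier_mat (dS*dW) (dS*dW)" using HSc HWc by auto
  obtain V \<mu> where U: "unitary_mat dS V" and HSe0: "HS = V * mat_diag dS (\<lambda>i. complex_of_real (\<mu> i)) * mat_adjoint V"
    using spectral[OF HSh] by blast
  have Vc: "V \<in> carrier_mat dS dS" using unitaryD[OF U] by auto
  have HSe: "HS = udm dS V (\<lambda>i. complex_of_real (\<mu> i))" unfolding udm_def by (rule HSe0)
  obtain dB HB W where dB: "0 < dB" and HBh: "hermitian_mat dB HB" and Wu: "unitary_mat (dS * dW * dB) W"
    and Wcomm: "W * (kron ?HX (1\<^sub>m dB) + kron (1\<^sub>m (dS * dW)) HB) = (kron ?HX (1\<^sub>m dB) + kron (1\<^sub>m (dS * dW)) HB) * W"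
    and Teq: "\<And>\<rho>. density_mat (dS * dW) \<rho> \<Longrightarrow> T \<rho> = ptrace2 dB (W * kron \<rho> (gibbs \<beta> HB) * mat_adjoint W)"
    using th unfolding thermal_op_def by blast
  let ?G = "gibbs \<beta> HB"
  have HBc: "HB \<in> carrier_mat dB dB" using HBh unfolding hermitian_mat_def by auto
  have Gc: "?G \<in> carrier_mat dB dB" and GB: "HB * ?G = ?G * HB" using gibbs_comm[OF HBh] by auto
  have Htotc: "kron ?HX (1\<^sub>m dB) + kron (1\<^sub>m (dS * dW)) HB \<in> carrier_mat (dS * dW * dB) (dS * dW * dB)"
    using HXc HBc by auto
  define L where "L = (\<lambda>Y. ptrace2 dB (W * kron Y ?G * mat_adjoint W))"
  have Wc: "W \<in> carrier_mat (dS * dW * dB) (dS * dW * dB)" and Wa: "mat_adjoint W \<in> carrier_mat (dS * dW * dB) (dS * dW * dB)"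
    using unitaryD[OF Wu] by auto
  have Lmode: "is_mode (dS*dW) ?HX \<omega> (L Y)" if Y: "is_mode (dS*dW) ?HX \<omega> Y" for \<omega> Y
  proof -
    have "is_mode (dS*dW*dB) (kron ?HX (1\<^sub>m dB) + kron (1\<^sub>m (dS * dW)) HB) \<omega> (kron Y ?G)"
      by (rule kron_mode[OF HXc HBc Y Gc GB])
    hence "is_mode (dS*dW*dB) (kron ?HX (1\<^sub>m dB) + kron (1\<^sub>m (dS * dW)) HB) \<omega> (W * kron Y ?G * mat_adjoint W)"
      by (rule unitary_mode[OF Wu Htotc Wcomm])
    thus ?thesis unfolding L_def by (rule pt_mode[OF dB HXc HBc])
  qed
  have Lc: "L Y \<in> carrier_mat (dS*dW) (dS*dW)" if "Y \<in> carrier_mat (dS*dW) (dS*dW)" for Y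
    unfolding L_def using dB that Gc Wc Wa by (intro pt_carrier, auto)
  define N where "N = mat_adjoint V * \<rho>S * V"
  have Nc: "N \<in> carrier_mat dS dS" unfolding N_def using Vc Rc by auto
  define \<Omega> where "\<Omega> = Om dS \<mu>"
  define \<rho>w where "\<rho>w = (\<lambda>\<omega>. cj V (Xm dS \<mu> N \<omega>))"
  define X where "X = (\<lambda>\<omega>. kron (\<rho>w \<omega>) ?P)"
  have \<rho>wc: "\<rho>w \<omega> \<in> carrier_mat dS dS" for \<omega> unfolding \<rho>w_def using Vc by simp
  have Xc: "X \<omega> \<in> carrier_mat (dS*dW) (dS*dW)" for \<omega> unfolding X_def using \<rho>wc Pc by simp
  have "msum dS \<Omega> \<rho>w = cj V N" unfolding \<Omega>_def \<rho>w_def by (rule msum_decomp[OF Vc Nc])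
  also have "cj V N = \<rho>S" unfolding N_def by (rule cj_back[OF U Rc])
  finally have Rsum: "msum dS \<Omega> \<rho>w = \<rho>S" .
  have Xmode: "is_mode (dS*dW) ?HX \<omega> (X \<omega>)" for \<omega>
  proof -
    have "is_mode dS HS \<omega> (\<rho>w \<omega>)" unfolding \<rho>w_def HSe by (rule Xm_mode[OF U])
    thus ?thesis unfolding X_def by (rule kron_mode[OF HSc HWc _ Pc PW])
  qed
  have LinL: "L (kron \<rho>S ?P) = msum (dS*dW) \<Omega> (\<lambda>\<omega>. L (X \<omega>))"
  proof -
    have "kron \<rho>S ?P = msum (dS*dW) \<Omega> X" unfolding Rsum[symmetric] X_def by (rule kron_msum[OF \<rho>wc Pc])
    hence "kron (kron \<rho>S ?P) ?G = msum (dS*dW*dB) \<Omega> (\<lambda>\<omega>. kron (X \<omega>) ?G)"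
      using kron_msum[OF Xc Gc] by simp
    hence "W * kron (kron \<rho>S ?P) ?G * mat_adjoint W = msum (dS*dW*dB) \<Omega> (\<lambda>\<omega>. W * kron (X \<omega>) ?G * mat_adjoint W)"
      using msum_mult_left[OF Wc, of \<Omega> "\<lambda>\<omega>. kron (X \<omega>) ?G"] msum_mult_right[OF Wa, of \<Omega> "\<lambda>\<omega>. W * kron (X \<omega>) ?G"]
        Xc Gc Wc by auto
    moreover have cW: "W * kron (X \<omega>) ?G * mat_adjoint W \<in> carrier_mat (dS*dW*dB) (dS*dW*dB)" for \<omega>
      using Xc[of \<omega>] Gc Wc Wa by (intro mult_carrier_mat[of _ _ "dS*dW*dB"], auto)
    ultimately show ?thesis unfolding L_def using pt_msum[OF dB cW] by simp
  qed
  have dens1: "density_mat (dS*dW) (kron \<rho>S ?P)" by (rule density_kron_proj[OF R v0 vv])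
  have deph: "dephase HS \<rho>S = \<rho>w 0" unfolding HSe \<rho>w_def N_def by (rule dephase_Xm[OF U Rc])
  have dens2: "density_mat (dS*dW) (kron (dephase HS \<rho>S) ?P)"
    unfolding deph \<rho>w_def N_def by (rule density_kron_proj[OF density_dephased[OF U R] v0 vv])
  have hypL: "L (kron \<rho>S ?P) = ?g" using hyp Teq[OF dens1] unfolding L_def by simp
  have \<gamma>c: "gibbs \<beta> HS \<in> carrier_mat dS dS" and \<gamma>H: "HS * gibbs \<beta> HS = gibbs \<beta> HS * HS"
    using gibbs_comm[OF HSh] by auto
  have gc: "?g \<in> carrier_mat (dS*dW) (dS*dW)" using \<gamma>c \<sigma>C by simp
  have \<gamma>mode: "is_mode dS HS 0 (gibbs \<beta> HS)"
    unfolding is_mode_def \<gamma>H using \<gamma>c HSc by (auto intro!: eq_matI)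
  have gmode: "is_mode (dS*dW) ?HX 0 ?g"
    by (rule kron_mode[OF HSc HWc \<gamma>mode \<sigma>C \<sigma>c[symmetric]])
  have Om0: "0 \<in> \<Omega>" unfolding \<Omega>_def by (rule Om_zero[OF assms(2)])
  define Z where "Z = (\<lambda>\<omega>. if \<omega> = 0 then L (X 0) - ?g else L (X \<omega>))"
  have Zmode: "is_mode (dS*dW) ?HX \<omega> (Z \<omega>)" if "\<omega> \<in> \<Omega>" for \<omega>
  proof (cases "\<omega> = 0")
    case True thus ?thesis unfolding Z_def using is_mode_minus[OF Lmode[OF Xmode] gmode HXc] by simp
  next
    case False thus ?thesis unfolding Z_def using Lmode[OF Xmode] by simp
  qed
  have Zsum: "msum (dS*dW) \<Omega> Z = 0\<^sub>m (dS*dW) (dS*dW)"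
    unfolding msum_zero_iff
  proof (intro allI impI)
    fix i j assume ij: "i < dS*dW" "j < dS*dW"
    have "(\<Sum>\<omega>\<in>\<Omega>. Z \<omega> $$ (i,j)) = (\<Sum>\<omega>\<in>\<Omega>. L (X \<omega>) $$ (i,j) - (if \<omega> = 0 then ?g $$ (i,j) else 0))"
    proof (rule sum.cong[OF refl])
      fix \<omega> assume "\<omega> \<in> \<Omega>"
      have gd: "dim_row ?g = dS*dW" "dim_col ?g = dS*dW" using gc by auto
      show "Z \<omega> $$ (i,j) = L (X \<omega>) $$ (i,j) - (if \<omega> = 0 then ?g $$ (i,j) else 0)"
        unfolding Z_def using index_minus_mat(1)[of i ?g j "L (X 0)"] gd ij by auto
    qed
    also have "\<dots> = (\<Sum>\<omega>\<in>\<Omega>. L (X \<omega>) $$ (i,j)) - ?g $$ (i,j)"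
      using Om0 Om_finite[of dS \<mu>] unfolding \<Omega>_def by (simp add: sum_subtractf sum.delta)
    also have "(\<Sum>\<omega>\<in>\<Omega>. L (X \<omega>) $$ (i,j)) = L (kron \<rho>S ?P) $$ (i,j)" unfolding LinL using ij by (simp add: msum_index)
    finally show "(\<Sum>\<omega>\<in>\<Omega>. Z \<omega> $$ (i,j)) = 0" unfolding hypL by simp
  qed
  have "Z 0 = 0\<^sub>m (dS*dW) (dS*dW)"
    using modes_unique[OF _ HXc Zmode Zsum] Om0 Om_finite[of dS \<mu>] unfolding \<Omega>_def by auto
  hence LX0: "L (X 0) = ?g" unfolding Z_def using Lc[OF Xc] gc
    by (auto simp: mat_eq_iff)
  show ?thesis using Teq[OF dens2] LX0 unfolding L_def X_def deph by simp
qed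

end
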